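(* There exists a function $\Omega\in L^1(\mathbf S^1)$ with mean value zero such that $\Omega\notin H^1(\mathbf S^1)$ but, for every $\alpha>0$, $$\sup_{\xi\in\mathbf S^{1}}\int_{\mathbf S^{1}}|\Omega(\theta)|\Big(\ln\frac{1}{|\theta\cdot\xi|}\Big)^{1+\alpha}d\theta<\infty.$$
   Context: $H^1(\mathbf S^1)$ denotes the Hardy space on the unit circle in the sense of Coifman and Weiss (equivalently, identifying $\mathbf S^1$ with $[0,1]$ via $x\mapsto(\cos 2\pi x,\sin 2\pi x)$, a mean-zero integrable $\Omega$ lies in $H^1$ iff the Hilbert transform on $\mathbb R$ of the corresponding function on $[0,1]$ extended by zero is integrable). *)

theory Defs
  imports "HOL-Analysis.Analysis"
begin

text \<open>We identify the unit circle with [0,1] via x \<mapsto> (cos 2\<pi>x, sin 2\<pi>x).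
  A function on the circle is thus a real function on [0,1].\<close>

definition trunc_hilbert :: "(real \<Rightarrow> real) \<Rightarrow> real \<Rightarrow> real \<Rightarrow> real" where
  "trunc_hilbert f \<epsilon> x = (1 / pi) * (LINT y:{y. \<epsilon> < \<bar>x - y\<bar>}|lborel. f y / (x - y))"

text \<open>Mean-zero integrable \<Omega> on [0,1] belongs to H^1 iff the Hilbert transform on the
  real line of \<Omega> extended by zero (defined a.e. as the principal value limit) is integrable.\<close>
definition in_H1_circle :: "(real \<Rightarrow> real) \<Rightarrow> bool" where
  "in_H1_circle \<Omega> \<longleftrightarrow>
     set_integrable lborel {0..1} \<Omega> \<and> (LINT x:{0..1}|lborel. \<Omega> x) = 0 \<and>
     (\<exists>g. integrable lborel g \<and>
        (AE x in lborel.
           ((\<lambda>\<epsilon>. trunc_hilbert (\<lambda>y. indicator {0..1} y * \<Omega> y) \<epsilon> x) \<longlongrightarrow> g x) (at_right 0)))"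

end

theory Submission
  imports Defs
begin

definition lam :: "nat \<Rightarrow> real" where "lam n = (1/2)^(n+1)"
definition aa :: "nat \<Rightarrow> real" where "aa n = 1 - (1/2)^n"
definition NN :: "nat \<Rightarrow> nat" where "NN n = 2^(4^(n+1))"
definition PP :: "nat \<Rightarrow> real" where "PP n = lam n / real (NN n)"
definition RR :: "nat \<Rightarrow> real" where "RR n = PP n / 4"
definition dd :: "nat \<Rightarrow> real" where "dd n = RR n / real (NN n)"
definition hh :: "nat \<Rightarrow> real" where "hh n = 4 * lam n * real (NN n)"
definition bb :: "nat \<Rightarrow> nat \<Rightarrow> real" where "bb n i = aa n + real i * PP n + 2 * RR n"
definition fg :: "nat \<Rightarrow> real \<Rightarrow> real" where
  "fg n y = (\<Sum>i<NN n. hh n * (indicator {bb n i..bb n i + dd n} y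
        - indicator {bb n i + RR n..bb n i + RR n + dd n} y))"
definition Om :: "real \<Rightarrow> real" where "Om y = (\<Sum>n. fg n y)"

lemma lam_pos: "0 < lam n" by (simp add: lam_def)
lemma NN_ge2: "2 \<le> NN n"
proof -
  have "1 \<le> (4::nat)^(n+1)" by simp
  hence "(2::nat)^1 \<le> 2^(4^(n+1))" by (intro power_increasing) auto
  thus ?thesis by (simp add: NN_def)
qed
lemma NN_pos: "0 < real (NN n)" using NN_ge2[of n] by simp
lemma PP_pos: "0 < PP n" unfolding PP_def by (intro divide_pos_pos lam_pos NN_pos)
lemma RR_pos: "0 < RR n" by (simp add: RR_def PP_pos)
lemma dd_pos: "0 < dd n" unfolding dd_def by (intro divide_pos_pos RR_pos NN_pos)
lemma dd_le: "2 * dd n \<le> RR n"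
proof -
  have "2 \<le> real (NN n)" using NN_ge2[of n] by linarith
  hence "RR n * 2 \<le> RR n * real (NN n)" using RR_pos[of n] by (intro mult_left_mono) auto
  thus ?thesis unfolding dd_def using NN_pos[of n] by (simp add: field_simps)
qed
lemma NN_PP: "real (NN n) * PP n = lam n" using NN_pos[of n] by (simp add: PP_def)
lemma PP_RR: "PP n = 4 * RR n" by (simp add: RR_def)
lemma aa_Suc: "aa (Suc n) = aa n + lam n" by (simp add: aa_def lam_def)
lemma aa_nonneg: "0 \<le> aa n" by (simp add: aa_def power_le_one)
lemma aa_lt1: "aa n < 1" by (simp add: aa_def)
lemma aa_mono: "n \<le> m \<Longrightarrow> aa n \<le> aa m"
  by (simp add: aa_def power_decreasing)
lemma hh_dd: "hh n * dd n = lam n ^ 2 / real (NN n)"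
  using NN_pos[of n] by (simp add: hh_def dd_def RR_def PP_def power2_eq_square field_simps)
lemma hh_pos: "0 < hh n" unfolding hh_def using lam_pos[of n] NN_pos[of n] by simp

lemma cell_lo: "aa n + 2 * RR n \<le> bb n i" using PP_pos[of n] by (simp add: bb_def)
lemma cell_hi: "i < NN n \<Longrightarrow> bb n i + 2 * RR n \<le> aa (Suc n)"
proof -
  assume "i < NN n"
  hence "real i + 1 \<le> real (NN n)" by linarith
  hence "(real i + 1) * PP n \<le> real (NN n) * PP n" using PP_pos[of n] by (intro mult_right_mono) auto
  hence "(real i + 1) * PP n \<le> lam n" using NN_PP[of n] by linarith
  moreover have "bb n i + 2*RR n = aa n + (real i + 1) * PP n" by (simp add: bb_def PP_RR algebra_simps)
  ultimately show ?thesis using aa_Suc[of n] by linarith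
qed

lemma fg_nz: assumes "fg n y \<noteq> 0" shows "\<exists>i<NN n. bb n i \<le> y \<and> y \<le> bb n i + RR n + dd n"
proof (rule ccontr)
  assume H: "\<not> ?thesis"
  have "\<And>i. i < NN n \<Longrightarrow> indicator {bb n i..bb n i + dd n} y = (0::real) \<and>
     indicator {bb n i + RR n..bb n i + RR n + dd n} y = (0::real)"
  proof -
    fix i assume "i < NN n"
    with H have "\<not> (bb n i \<le> y \<and> y \<le> bb n i + RR n + dd n)" by blast
    thus "indicator {bb n i..bb n i + dd n} y = (0::real) \<and>
     indicator {bb n i + RR n..bb n i + RR n + dd n} y = (0::real)"
      using RR_pos[of n] dd_pos[of n] by (auto simp: indicator_def)
  qed
  hence "fg n y = 0" unfolding fg_def by (intro sum.neutral) auto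
  with assms show False by simp
qed

lemma fg_range: assumes "fg n y \<noteq> 0" shows "aa n < y \<and> y < aa (Suc n)"
proof -
  obtain i where i: "i < NN n" "bb n i \<le> y" "y \<le> bb n i + RR n + dd n" using fg_nz[OF assms] by blast
  have "aa n + 2 * RR n \<le> bb n i" by (rule cell_lo)
  moreover have "bb n i + 2 * RR n \<le> aa (Suc n)" by (rule cell_hi[OF i(1)])
  ultimately show ?thesis using i RR_pos[of n] dd_le[of n] dd_pos[of n] by linarith
qed

lemma fg_unique: assumes "fg n y \<noteq> 0" "fg m y \<noteq> 0" shows "n = m"
proof (rule ccontr)
  assume "n \<noteq> m"
  then consider "n < m" | "m < n" by linarith
  thus False
  proof cases
    case 1 hence "aa (Suc n) \<le> aa m" by (intro aa_mono) simp
    thus False using fg_range[OF assms(1)] fg_range[OF assms(2)] by linarith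
  next
    case 2 hence "aa (Suc m) \<le> aa n" by (intro aa_mono) simp
    thus False using fg_range[OF assms(1)] fg_range[OF assms(2)] by linarith
  qed
qed

lemma fg_fin: "finite {n. fg n y \<noteq> 0}"
proof (cases "\<exists>n. fg n y \<noteq> 0")
  case True
  then obtain n where n: "fg n y \<noteq> 0" by blast
  have "{n. fg n y \<noteq> 0} \<subseteq> {n}" using fg_unique[OF n] by blast
  thus ?thesis using finite_subset by blast
qed simp

lemma Om_eq: assumes "fg n y \<noteq> 0" shows "Om y = fg n y"
proof -
  have "Om y = (\<Sum>m\<in>{n}. fg m y)" unfolding Om_def
    using fg_unique[OF assms] by (intro suminf_finite) auto
  thus ?thesis by simp
qed

lemma Om_zero: assumes "\<And>n. fg n y = 0" shows "Om y = 0"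
  unfolding Om_def using assms by simp

lemma Om_nz: assumes "Om y \<noteq> 0" shows "\<exists>n. fg n y \<noteq> 0 \<and> Om y = fg n y"
  using Om_eq Om_zero assms by metis

lemma Om_supp: assumes "Om y \<noteq> 0" shows "0 < y \<and> y < 1"
proof -
  obtain n where "fg n y \<noteq> 0" using Om_nz[OF assms] by blast
  from fg_range[OF this] show ?thesis using aa_nonneg[of n] aa_lt1[of "Suc n"] by linarith
qed

lemma Icc_int: "integrable lborel (indicator {a..b::real} :: real \<Rightarrow> real)"
  by (rule integrable_real_indicator) (auto simp: emeasure_lborel_Icc_eq)

lemma fg_integrable: "integrable lborel (fg n)"
  unfolding fg_def[abs_def]
  by (intro Bochner_Integration.integrable_sum integrable_mult_right Bochner_Integration.integrable_diff Icc_int)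

lemma Icc_integral: "a \<le> b \<Longrightarrow> integral\<^sup>L lborel (indicator {a..b::real} :: real \<Rightarrow> real) = b - a"
  by simp

lemma fg_integral: "integral\<^sup>L lborel (fg n) = 0"
  unfolding fg_def[abs_def]
  using dd_pos[of n] by (simp add: integral_sum integrable_mult_right Bochner_Integration.integrable_diff Icc_int)

lemma fg_abs_le: "\<bar>fg n y\<bar> \<le> (\<Sum>i<NN n. hh n * (indicator {bb n i..bb n i + dd n} y
        + indicator {bb n i + RR n..bb n i + RR n + dd n} y))"
  unfolding fg_def
proof (rule order_trans[OF sum_abs], rule sum_mono)
  fix i
  show "\<bar>hh n * (indicator {bb n i..bb n i + dd n} y - indicator {bb n i + RR n..bb n i + RR n + dd n} y)\<bar>
         \<le> hh n * (indicator {bb n i..bb n i + dd n} y + indicator {bb n i + RR n..bb n i + RR n + dd n} y)"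
    using hh_pos[of n] by (simp add: abs_mult indicator_def)
qed

lemma fg_abs_int: "(\<integral>y. \<bar>fg n y\<bar> \<partial>lborel) \<le> 2 * lam n ^ 2"
proof -
  have "(\<integral>y. \<bar>fg n y\<bar> \<partial>lborel) \<le> (\<integral>y. (\<Sum>i<NN n. hh n * (indicator {bb n i..bb n i + dd n} y
        + indicator {bb n i + RR n..bb n i + RR n + dd n} y)) \<partial>lborel)"
    by (intro integral_mono fg_abs_le integrable_abs fg_integrable Bochner_Integration.integrable_sum integrable_mult_right Bochner_Integration.integrable_add Icc_int)
  also have "\<dots> = real (NN n) * (hh n * (2 * dd n))"
    using dd_pos[of n] by (simp add: integral_sum integrable_mult_right Bochner_Integration.integrable_add Icc_int)
  also have "\<dots> = 2 * lam n ^ 2" using hh_dd[of n] NN_pos[of n] by (simp add: field_simps)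
  finally show ?thesis .
qed

lemma lam2_eq: "lam n ^ 2 = (1/4) * (1/4)^n"
  by (simp add: lam_def power_mult_distrib[symmetric] power_mult[symmetric] power2_eq_square power_add)

lemma summable_lam2: "summable (\<lambda>n. lam n ^ 2)"
  unfolding lam2_eq by (intro summable_mult summable_geometric) simp

lemma summable_lam: "summable lam"
  unfolding lam_def by (simp add: summable_geometric)

lemma Om_props:
  shows Om_integrable: "integrable lborel Om"
    and Om_integral: "integral\<^sup>L lborel Om = 0"
proof -
  have s: "summable (\<lambda>i. norm (fg i x))" for x
    by (rule summable_finite[OF fg_fin[of x]]) auto
  have s2: "summable (\<lambda>i. (\<integral>x. norm (fg i x) \<partial>lborel))"
  proof (rule summable_comparison_test[OF _ summable_mult[OF summable_lam2, of 2]])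
    show "\<exists>N. \<forall>n\<ge>N. norm (\<integral>x. norm (fg n x) \<partial>lborel) \<le> 2 * lam n ^ 2"
      using fg_abs_int by (auto intro!: exI[of _ 0])
  qed
  have "integrable lborel (\<lambda>x. \<Sum>i. fg i x)"
    by (rule integrable_suminf[OF fg_integrable]) (use s s2 in auto)
  thus "integrable lborel Om" unfolding Om_def[abs_def] .
  have "(\<integral>x. (\<Sum>i. fg i x) \<partial>lborel) = (\<Sum>i. integral\<^sup>L lborel (fg i))"
    by (rule integral_suminf[OF fg_integrable]) (use s s2 in auto)
  thus "integral\<^sup>L lborel Om = 0" unfolding Om_def[abs_def] fg_integral by simp
qed

definition Q :: "real \<Rightarrow> real \<Rightarrow> ennreal" where "Q w x = ennreal (\<bar>x - w\<bar> powr (-1/2))"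

lemma Q_meas[measurable]: "(\<lambda>x. Q w x) \<in> borel_measurable borel"
  unfolding Q_def by measurable

lemma half_int: assumes "0 < r"
  shows "(\<integral>\<^sup>+s. indicator {0..r} s * ennreal (s powr (-1/2)) \<partial>lborel) = 2 * sqrt r"
proof -
  have "((\<lambda>s. s powr (-1/2)) has_integral (r powr (-1/2+1) / (-1/2+1))) {0..r}"
    by (rule has_integral_powr_from_0) (use assms in auto)
  hence h: "((\<lambda>s. s powr (-1/2)) has_integral (2 * sqrt r)) {0..r}"
    using assms by (simp add: powr_half_sqrt mult.commute)
  have "(\<integral>\<^sup>+s. ennreal (s powr (-1/2)) * indicator {0..r} s \<partial>lborel) = ennreal (2 * sqrt r)"
    by (rule nn_integral_has_integral_lebesgue'[OF _ h]) simp
  thus ?thesis by (simp add: mult.commute)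
qed

lemma Q_right: assumes "0 < r"
  shows "(\<integral>\<^sup>+x. indicator {w..w+r} x * Q w x \<partial>lborel) = 2 * sqrt r"
proof -
  have "(\<integral>\<^sup>+x. indicator {w..w+r} x * Q w x \<partial>lborel)
      = (\<integral>\<^sup>+s. indicator {w..w+r} (w + 1 * s) * Q w (w + 1 * s) \<partial>lborel)"
    using nn_integral_real_affine[of "\<lambda>x. indicator {w..w+r} x * Q w x" 1 w] by simp
  also have "\<dots> = (\<integral>\<^sup>+s. indicator {0..r} s * ennreal (s powr (-1/2)) \<partial>lborel)"
    by (intro nn_integral_cong) (auto simp: Q_def indicator_def)
  finally show ?thesis using half_int[OF assms] by simp
qed

lemma Q_left: assumes "0 < r"
  shows "(\<integral>\<^sup>+x. indicator {w-r..w} x * Q w x \<partial>lborel) = 2 * sqrt r"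
proof -
  have "(\<integral>\<^sup>+x. indicator {w-r..w} x * Q w x \<partial>lborel)
      = (\<integral>\<^sup>+s. indicator {w-r..w} (w + (-1) * s) * Q w (w + (-1) * s) \<partial>lborel)"
    using nn_integral_real_affine[of "\<lambda>x. indicator {w-r..w} x * Q w x" "-1" w] by simp
  also have "\<dots> = (\<integral>\<^sup>+s. indicator {0..r} s * ennreal (s powr (-1/2)) \<partial>lborel)"
    by (intro nn_integral_cong) (auto simp: Q_def indicator_def)
  finally show ?thesis using half_int[OF assms] by simp
qed

lemma Q_ball: assumes "0 < r"
  shows "(\<integral>\<^sup>+x. indicator {w-r..w+r} x * Q w x \<partial>lborel) \<le> 4 * sqrt r"
proof -
  have "(\<integral>\<^sup>+x. indicator {w-r..w+r} x * Q w x \<partial>lborel)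
     \<le> (\<integral>\<^sup>+x. indicator {w-r..w} x * Q w x + indicator {w..w+r} x * Q w x \<partial>lborel)"
    by (intro nn_integral_mono) (auto simp: indicator_def)
  also have "\<dots> = (\<integral>\<^sup>+x. indicator {w-r..w} x * Q w x \<partial>lborel) + (\<integral>\<^sup>+x. indicator {w..w+r} x * Q w x \<partial>lborel)"
    by (intro nn_integral_add) auto
  also have "\<dots> = ennreal (2 * sqrt r) + ennreal (2 * sqrt r)" using Q_left[OF assms] Q_right[OF assms]
    by simp
  also have "\<dots> = ennreal (2 * sqrt r + 2 * sqrt r)" by (rule ennreal_plus[symmetric]) (use assms in auto)
  also have "\<dots> = ennreal (4 * sqrt r)" by simp
  finally show ?thesis by simp
qed

lemma Q_split: assumes "0 < r" "A \<in> sets borel"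
  shows "(\<integral>\<^sup>+x. indicator A x * Q w x \<partial>lborel) \<le> 4 * sqrt r + emeasure lborel A * ennreal (r powr (-1/2))"
proof -
  have "(\<integral>\<^sup>+x. indicator A x * Q w x \<partial>lborel)
     \<le> (\<integral>\<^sup>+x. indicator {w-r..w+r} x * Q w x + ennreal (r powr (-1/2)) * indicator A x \<partial>lborel)"
  proof (intro nn_integral_mono)
    fix x
    show "indicator A x * Q w x \<le> indicator {w-r..w+r} x * Q w x + ennreal (r powr (-1/2)) * indicator A x"
    proof (cases "\<bar>x - w\<bar> \<le> r")
      case True
      hence "x \<in> {w-r..w+r}" by auto
      thus ?thesis by (auto simp: indicator_def)
    next
      case False
      hence "\<bar>x - w\<bar> powr (-1/2) \<le> r powr (-1/2)" using assms(1) by (intro powr_mono2') auto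
      hence "Q w x \<le> ennreal (r powr (-1/2))" unfolding Q_def by (rule ennreal_leI)
      thus ?thesis by (auto simp: indicator_def)
    qed
  qed
  also have "\<dots> = (\<integral>\<^sup>+x. indicator {w-r..w+r} x * Q w x \<partial>lborel) + ennreal (r powr (-1/2)) * emeasure lborel A"
    using assms(2) by (subst nn_integral_add) (auto simp: nn_integral_cmult_indicator)
  also have "\<dots> \<le> 4 * sqrt r + emeasure lborel A * ennreal (r powr (-1/2))"
    using Q_ball[OF assms(1), of w] by (simp add: mult.commute add_right_mono)
  finally show ?thesis .
qed

lemma Q_mono: assumes "0 < \<bar>s - w\<bar>" "\<bar>s - w\<bar> \<le> \<bar>x - w\<bar>" shows "Q w x \<le> Q w s"
  unfolding Q_def using assms by (intro ennreal_leI powr_mono2') auto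

lemma far_bound:
  assumes I: "I \<in> sets borel" "emeasure lborel I = ennreal dl"
    and S: "S \<in> sets borel" "emeasure lborel S = ennreal L" "0 < L"
    and mono: "\<And>x s. x \<in> I \<Longrightarrow> s \<in> S \<Longrightarrow> Q w x \<le> Q w s"
    and dl: "0 \<le> dl"
  shows "(\<integral>\<^sup>+x. indicator I x * Q w x \<partial>lborel) \<le> ennreal (dl / L) * (\<integral>\<^sup>+s. indicator S s * Q w s \<partial>lborel)"
proof -
  define T where "T = (\<integral>\<^sup>+s. indicator S s * Q w s \<partial>lborel)"
  have pt: "Q w x \<le> ennreal (1 / L) * T" if x: "x \<in> I" for x
  proof -
    have "(\<integral>\<^sup>+s. Q w x * indicator S s \<partial>lborel) = Q w x * emeasure lborel S"
      using S(1) by (intro nn_integral_cmult_indicator) simp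
    hence "ennreal L * Q w x = (\<integral>\<^sup>+s. Q w x * indicator S s \<partial>lborel)"
      using S(2) by (simp add: mult.commute)
    also have "\<dots> \<le> T" unfolding T_def
      using mono[OF x] by (intro nn_integral_mono) (auto simp: indicator_def)
    finally have "ennreal (1/L) * (ennreal L * Q w x) \<le> ennreal (1/L) * T" by (rule mult_left_mono) simp
    moreover have "ennreal (1/L) * (ennreal L * Q w x) = Q w x"
      using S(3) by (simp add: mult.assoc[symmetric] ennreal_mult[symmetric] del: ennreal_mult)
    ultimately show ?thesis by simp
  qed
  have "(\<integral>\<^sup>+x. indicator I x * Q w x \<partial>lborel) \<le> (\<integral>\<^sup>+x. (ennreal (1 / L) * T) * indicator I x \<partial>lborel)"
    using pt by (intro nn_integral_mono) (auto simp: indicator_def)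
  also have "\<dots> = (ennreal (1 / L) * T) * ennreal dl" using I by (simp add: nn_integral_cmult_indicator)
  also have "\<dots> = ennreal (dl / L) * T"
    using dl S(3) by (simp add: ennreal_mult[symmetric] mult.commute mult.left_commute del: ennreal_mult)
  finally show ?thesis unfolding T_def .
qed

lemma near_bound: assumes "0 < dl"
  shows "(\<integral>\<^sup>+x. indicator {a..a+dl} x * Q w x \<partial>lborel) \<le> ennreal (5 * sqrt dl)"
proof -
  have "(\<integral>\<^sup>+x. indicator {a..a+dl} x * Q w x \<partial>lborel) \<le> 4 * sqrt dl + emeasure lborel {a..a+dl} * ennreal (dl powr (-1/2))"
    by (rule Q_split[OF assms]) simp
  also have "\<dots> = ennreal (4 * sqrt dl) + ennreal (dl * dl powr (-1/2))"
    using assms by (simp add: ennreal_mult)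
  also have "dl * dl powr (-1/2) = sqrt dl"
  proof -
    have "dl powr (1 + (-1/2)) = dl powr 1 * dl powr (-1/2)" by (rule powr_add)
    hence "dl * dl powr (-1/2) = dl powr (1 + (-1/2))" using assms by simp
    also have "\<dots> = sqrt dl" using assms by (simp add: powr_half_sqrt)
    finally show ?thesis .
  qed
  also have "ennreal (4 * sqrt dl) + ennreal (sqrt dl) = ennreal (5 * sqrt dl)"
    by (subst ennreal_plus[symmetric]) (use assms in auto)
  finally show ?thesis .
qed

lemma AP_bound:
  fixes c P dl w :: real and N :: nat
  assumes P: "0 < P" and dl: "0 < dl" "2 * dl \<le> P"
  shows "(\<Sum>i<N. \<integral>\<^sup>+x. indicator {c + real i * P .. c + real i * P + dl} x * Q w x \<partial>lborel)
      \<le> ennreal (15 * sqrt dl) + ennreal (2 * dl / (P - dl)) * (\<integral>\<^sup>+x. indicator {c - P..c + real N * P} x * Q w x \<partial>lborel)"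
proof -
  define I where "I i = {c + real i * P .. c + real i * P + dl}" for i :: nat
  define S where "S j = {c + (real j - 1) * P + dl <..< c + real j * P}" for j :: nat
  define T where "T j = (\<integral>\<^sup>+s. indicator (S j) s * Q w s \<partial>lborel)" for j
  define near where "near i \<longleftrightarrow> c + (real i - 1) * P + dl < w \<and> w < c + (real i + 1) * P" for i :: nat
  define K where "K = ennreal (dl / (P - dl))"
  have PL: "0 < P - dl" using P dl by linarith
  have mI: "emeasure lborel (I i) = ennreal dl" for i unfolding I_def using dl by simp
  have mS: "emeasure lborel (S j) = ennreal (P - dl)" for j unfolding S_def using PL
    by (simp add: algebra_simps)
  have step: "(\<integral>\<^sup>+x. indicator (I i) x * Q w x \<partial>lborel)
      \<le> (if near i then ennreal (5 * sqrt dl) else 0) + K * (T i + T (Suc i))" for i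
  proof (cases "near i")
    case True
    have "(\<integral>\<^sup>+x. indicator (I i) x * Q w x \<partial>lborel) \<le> ennreal (5 * sqrt dl)"
      unfolding I_def by (rule near_bound[OF dl(1)])
    thus ?thesis using True by (simp add: add_increasing2)
  next
    case False
    then consider "w \<le> c + (real i - 1) * P + dl" | "c + (real i + 1) * P \<le> w"
      unfolding near_def by linarith
    thus ?thesis
    proof cases
      case 1
      have "(\<integral>\<^sup>+x. indicator (I i) x * Q w x \<partial>lborel) \<le> K * T i"
        unfolding K_def T_def
      proof (rule far_bound[OF _ mI _ mS PL _ less_imp_le[OF dl(1)]])
        fix x s assume x: "x \<in> I i" and s: "s \<in> S i"
        show "Q w x \<le> Q w s"
          using x s 1 unfolding I_def S_def by (intro Q_mono) (auto simp: algebra_simps)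
      qed (auto simp: I_def S_def)
      also have "\<dots> \<le> K * (T i + T (Suc i))" by (intro mult_left_mono) auto
      finally show ?thesis using False by simp
    next
      case 2
      have "(\<integral>\<^sup>+x. indicator (I i) x * Q w x \<partial>lborel) \<le> K * T (Suc i)"
        unfolding K_def T_def
      proof (rule far_bound[OF _ mI _ mS PL _ less_imp_le[OF dl(1)]])
        fix x s assume x: "x \<in> I i" and s: "s \<in> S (Suc i)"
        show "Q w x \<le> Q w s"
          using x s 2 unfolding I_def S_def by (intro Q_mono) (auto simp: algebra_simps)
      qed (auto simp: I_def S_def)
      also have "\<dots> \<le> K * (T i + T (Suc i))" by (intro mult_left_mono) auto
      finally show ?thesis using False by simp
    qed
  qed
  have nearcard: "(\<Sum>i<N. (if near i then ennreal (5 * sqrt dl) else 0)) \<le> ennreal (15 * sqrt dl)"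
  proof (cases "\<exists>i. near i")
    case False thus ?thesis by simp
  next
    case True
    then obtain i0 where i0: "near i0" by blast
    have diam: "real i < real j + 2" if "near i" "near j" for i j
    proof -
      have "c + (real i - 1) * P + dl < c + (real j + 1) * P" using that unfolding near_def by linarith
      hence "(real i - real j - 2) * P < 0" using dl by (simp add: algebra_simps)
      thus ?thesis using P by (simp add: mult_less_0_iff)
    qed
    have sub: "{i\<in>{..<N}. near i} \<subseteq> {i0 - 1, i0, i0 + 1}"
    proof
      fix i assume "i \<in> {i\<in>{..<N}. near i}"
      hence "near i" by simp
      from diam[OF this i0] diam[OF i0 this] have "i < i0 + 2" "i0 < i + 2" by linarith+
      thus "i \<in> {i0 - 1, i0, i0 + 1}" by auto
    qed
    have "card {i\<in>{..<N}. near i} \<le> card {i0 - 1, i0, i0 + 1}" by (rule card_mono[OF _ sub]) simp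
    also have "\<dots> \<le> 3" by (rule order_trans[OF card_insert_le_m1]) (auto simp: card_insert_if)
    finally have c3: "card {i\<in>{..<N}. near i} \<le> 3" .
    have "(\<Sum>i<N. (if near i then ennreal (5 * sqrt dl) else 0)) = (\<Sum>i\<in>{i\<in>{..<N}. near i}. ennreal (5 * sqrt dl))"
      by (rule sum.inter_filter[symmetric]) simp
    also have "\<dots> = of_nat (card {i\<in>{..<N}. near i}) * ennreal (5 * sqrt dl)" by (rule sum_constant)
    also have "\<dots> \<le> of_nat 3 * ennreal (5 * sqrt dl)" by (intro mult_right_mono) (use c3 in auto)
    also have "\<dots> = ennreal (15 * sqrt dl)" using ennreal_mult[of 3 "5 * sqrt dl"] dl by simp
    finally show ?thesis .
  qed
  have disj: "j = k" if "x \<in> S j" "x \<in> S k" for x j k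
  proof (rule ccontr)
    assume "j \<noteq> k"
    then consider "j < k" | "k < j" by linarith
    thus False
    proof cases
      case 1 hence "real j \<le> real k - 1" by linarith
      hence "real j * P \<le> (real k - 1) * P" using P by (intro mult_right_mono) auto
      moreover have "x < c + real j * P" "c + (real k - 1) * P + dl < x" using that unfolding S_def by auto
      ultimately show False using dl by linarith
    next
      case 2 hence "real k \<le> real j - 1" by linarith
      hence "real k * P \<le> (real j - 1) * P" using P by (intro mult_right_mono) auto
      moreover have "x < c + real k * P" "c + (real j - 1) * P + dl < x" using that unfolding S_def by auto
      ultimately show False using dl by linarith
    qed
  qed
  have ptw: "(\<Sum>j<Suc N. indicator (S j) x) \<le> (indicator {c - P..c + real N * P} x :: ennreal)" for x
  proof (cases "\<exists>j<Suc N. x \<in> S j")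
    case False thus ?thesis by (simp add: indicator_def)
  next
    case True
    then obtain j where j: "j < Suc N" "x \<in> S j" by blast
    have "(\<Sum>j<Suc N. indicator (S j) x :: ennreal) = (\<Sum>k\<in>{j}. indicator (S k) x)"
      using disj[OF j(2)] j(1) by (intro sum.mono_neutral_right) (auto simp: indicator_def)
    also have "\<dots> = 1" using j by simp
    also have "x \<in> {c - P..c + real N * P}"
    proof -
      have "real j \<le> real N" using j(1) by simp
      hence "real j * P \<le> real N * P" using P by (intro mult_right_mono) auto
      moreover have "0 \<le> real j * P" using P by simp
      moreover have "x < c + real j * P" "c + real j * P - P + dl < x" using j(2) unfolding S_def
        by (auto simp: algebra_simps)
      ultimately have "c - P \<le> x" "x \<le> c + real N * P" using dl by linarith+
      thus ?thesis by simp
    qed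
    hence "1 = (indicator {c - P..c + real N * P} x :: ennreal)" by simp
    finally show ?thesis by simp
  qed
  have Tsum: "(\<Sum>j<Suc N. T j) \<le> (\<integral>\<^sup>+x. indicator {c - P..c + real N * P} x * Q w x \<partial>lborel)"
  proof -
    have "(\<Sum>j<Suc N. T j) = (\<integral>\<^sup>+x. (\<Sum>j<Suc N. indicator (S j) x * Q w x) \<partial>lborel)"
      unfolding T_def by (rule nn_integral_sum[symmetric]) (auto simp: S_def)
    also have "\<dots> \<le> (\<integral>\<^sup>+x. indicator {c - P..c + real N * P} x * Q w x \<partial>lborel)"
    proof (intro nn_integral_mono)
      fix x
      have "(\<Sum>j<Suc N. indicator (S j) x * Q w x) = (\<Sum>j<Suc N. indicator (S j) x) * Q w x"
        by (rule sum_distrib_right[symmetric])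
      also have "\<dots> \<le> indicator {c - P..c + real N * P} x * Q w x" by (intro mult_right_mono ptw) auto
      finally show "(\<Sum>j<Suc N. indicator (S j) x * Q w x) \<le> indicator {c - P..c + real N * P} x * Q w x" .
    qed
    finally show ?thesis .
  qed
  have "(\<Sum>i<N. \<integral>\<^sup>+x. indicator (I i) x * Q w x \<partial>lborel)
     \<le> (\<Sum>i<N. (if near i then ennreal (5 * sqrt dl) else 0) + K * (T i + T (Suc i)))"
    by (intro sum_mono step)
  also have "\<dots> = (\<Sum>i<N. (if near i then ennreal (5 * sqrt dl) else 0)) + K * ((\<Sum>i<N. T i) + (\<Sum>i<N. T (Suc i)))"
    by (simp add: sum.distrib sum_distrib_left[symmetric] distrib_left)
  also have "\<dots> \<le> ennreal (15 * sqrt dl) + K * ((\<integral>\<^sup>+x. indicator {c - P..c + real N * P} x * Q w x \<partial>lborel) + (\<integral>\<^sup>+x. indicator {c - P..c + real N * P} x * Q w x \<partial>lborel))"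
  proof -
    have a: "(\<Sum>i<N. T i) \<le> (\<Sum>j<Suc N. T j)" by (intro sum_mono2) auto
    have b: "(\<Sum>i<N. T (Suc i)) \<le> (\<Sum>j<Suc N. T j)"
      by (subst sum.lessThan_Suc_shift) (simp add: add_increasing)
    show ?thesis
      by (intro add_mono nearcard mult_left_mono order.trans[OF a Tsum] order.trans[OF b Tsum]) auto
  qed
  also have "K * (\<integral>\<^sup>+x. indicator {c - P..c + real N * P} x * Q w x \<partial>lborel + \<integral>\<^sup>+x. indicator {c - P..c + real N * P} x * Q w x \<partial>lborel)
      = ennreal (2 * dl / (P - dl)) * (\<integral>\<^sup>+x. indicator {c - P..c + real N * P} x * Q w x \<partial>lborel)"
  proof -
    have "ennreal (dl / (P - dl)) * 2 = ennreal (2 * dl / (P - dl))"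
      using ennreal_mult[of "dl / (P - dl)" 2] PL dl by (simp add: mult.commute)
    thus ?thesis unfolding K_def by (simp add: mult_2[symmetric] mult.assoc[symmetric])
  qed
  finally show ?thesis unfolding I_def by (simp add: add_mono mult_left_mono)
qed

lemma lam_le: "lam n \<le> 1/2" unfolding lam_def by (simp add: power_le_one)

lemma dd_eq: "dd n = lam n / (4 * real (NN n)^2)"
  by (simp add: dd_def RR_def PP_def power2_eq_square field_simps)

lemma hh_sqrt_dd: "hh n * sqrt (dd n) \<le> 2 * lam n"
proof -
  have "sqrt (dd n) = sqrt (lam n) / (2 * real (NN n))"
    unfolding dd_eq using NN_pos[of n] by (simp add: real_sqrt_divide real_sqrt_mult)
  hence "hh n * sqrt (dd n) = 2 * lam n * sqrt (lam n)" using NN_pos[of n] by (simp add: hh_def field_simps)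
  also have "\<dots> \<le> 2 * lam n * 1" using lam_le[of n] lam_pos[of n] by (intro mult_left_mono) auto
  finally show ?thesis by simp
qed

lemma hh_dd_PP: "hh n * dd n / (PP n - dd n) \<le> 2 * lam n"
proof -
  have "dd n \<le> PP n / 2" using dd_le[of n] RR_pos[of n] PP_RR[of n] by linarith
  hence pd: "PP n / 2 \<le> PP n - dd n" by linarith
  have "hh n * dd n / (PP n - dd n) \<le> hh n * dd n / (PP n / 2)"
    using hh_pos[of n] dd_pos[of n] PP_pos[of n] pd by (intro divide_left_mono) auto
  also have "\<dots> = 2 * lam n" unfolding hh_dd PP_def using NN_pos[of n] lam_pos[of n]
    by (simp add: field_simps power2_eq_square)
  finally show ?thesis .
qed

lemma big_int: "(\<integral>\<^sup>+x. indicator {c - PP n..c + real (NN n) * PP n} x * Q w x \<partial>lborel) \<le> ennreal 6"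
proof -
  have "(\<integral>\<^sup>+x. indicator {c - PP n..c + real (NN n) * PP n} x * Q w x \<partial>lborel)
     \<le> 4 * sqrt 1 + emeasure lborel {c - PP n..c + real (NN n) * PP n} * ennreal (1 powr (-1/2))"
    by (rule Q_split) auto
  also have "\<dots> = ennreal 4 + ennreal (lam n + PP n)"
    using NN_PP[of n] PP_pos[of n] lam_pos[of n] by (simp add: algebra_simps emeasure_lborel_Icc_eq)
  also have "\<dots> = ennreal (4 + (lam n + PP n))" using lam_pos[of n] PP_pos[of n] by (simp add: ennreal_plus)
  also have "\<dots> \<le> ennreal 6"
  proof -
    have "PP n \<le> lam n" unfolding PP_def using lam_pos[of n] NN_ge2[of n]
      by (simp add: divide_le_eq)
    thus ?thesis by (rule_tac ennreal_leI) (use lam_le[of n] in linarith)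
  qed
  finally show ?thesis .
qed

lemma ennreal_sum_ind: "ennreal (\<Sum>i\<in>I. indicator (A i) x) = (\<Sum>i\<in>I. indicator (A i) x)"
proof -
  have "(\<Sum>i\<in>I. ennreal (indicator (A i) x)) = ennreal (\<Sum>i\<in>I. indicator (A i) x)" by (rule sum_ennreal) auto
  thus ?thesis by (simp add: ennreal_indicator)
qed

lemma AP_group: "(\<Sum>i<NN n. \<integral>\<^sup>+x. indicator {c + real i * PP n .. c + real i * PP n + dd n} x * Q w x \<partial>lborel)
   \<le> ennreal (15 * sqrt (dd n) + 12 * dd n / (PP n - dd n))"
proof -
  have PD: "0 < PP n - dd n" using dd_le[of n] RR_pos[of n] PP_RR[of n] by linarith
  have "(\<Sum>i<NN n. \<integral>\<^sup>+x. indicator {c + real i * PP n .. c + real i * PP n + dd n} x * Q w x \<partial>lborel)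
    \<le> ennreal (15 * sqrt (dd n)) + ennreal (2 * dd n / (PP n - dd n)) * (\<integral>\<^sup>+x. indicator {c - PP n..c + real (NN n) * PP n} x * Q w x \<partial>lborel)"
    by (rule AP_bound[OF PP_pos dd_pos]) (use dd_le[of n] RR_pos[of n] PP_RR[of n] in linarith)
  also have "\<dots> \<le> ennreal (15 * sqrt (dd n)) + ennreal (2 * dd n / (PP n - dd n)) * ennreal 6"
    by (intro add_mono mult_left_mono big_int) auto
  also have "ennreal (2 * dd n / (PP n - dd n)) * ennreal 6 = ennreal (12 * dd n / (PP n - dd n))"
    using PD dd_pos[of n] ennreal_mult[of "2 * dd n / (PP n - dd n)" 6] by simp
  also have "ennreal (15 * sqrt (dd n)) + ennreal (12 * dd n / (PP n - dd n)) = ennreal (15 * sqrt (dd n) + 12 * dd n / (PP n - dd n))"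
    using PD dd_pos[of n] by (subst ennreal_plus) auto
  finally show ?thesis .
qed

lemma fg_Q: "(\<integral>\<^sup>+x. ennreal \<bar>fg n x\<bar> * Q w x \<partial>lborel) \<le> ennreal (108 * lam n)"
proof -
  define E where "E = 15 * sqrt (dd n) + 12 * dd n / (PP n - dd n)"
  have PD: "0 < PP n - dd n" using dd_le[of n] RR_pos[of n] PP_RR[of n] by linarith
  have E0: "0 \<le> E" unfolding E_def using PD dd_pos[of n] by simp
  have "(\<integral>\<^sup>+x. ennreal \<bar>fg n x\<bar> * Q w x \<partial>lborel)
    \<le> (\<integral>\<^sup>+x. ennreal (hh n) * ((\<Sum>i<NN n. indicator {bb n i..bb n i + dd n} x * Q w x)
          + (\<Sum>i<NN n. indicator {bb n i + RR n..bb n i + RR n + dd n} x * Q w x)) \<partial>lborel)"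
  proof (intro nn_integral_mono)
    fix x
    have "ennreal \<bar>fg n x\<bar> \<le> ennreal (\<Sum>i<NN n. hh n * (indicator {bb n i..bb n i + dd n} x
        + indicator {bb n i + RR n..bb n i + RR n + dd n} x))"
      by (intro ennreal_leI fg_abs_le)
    also have "\<dots> = ennreal (hh n) * ((\<Sum>i<NN n. indicator {bb n i..bb n i + dd n} x)
        + (\<Sum>i<NN n. indicator {bb n i + RR n..bb n i + RR n + dd n} x))"
    proof -
      have "(\<Sum>i<NN n. hh n * (indicator {bb n i..bb n i + dd n} x
        + indicator {bb n i + RR n..bb n i + RR n + dd n} x)) = hh n * ((\<Sum>i<NN n. indicator {bb n i..bb n i + dd n} x)
        + (\<Sum>i<NN n. indicator {bb n i + RR n..bb n i + RR n + dd n} x))"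
        by (simp add: sum_distrib_left[symmetric] sum.distrib)
      moreover have "ennreal ((\<Sum>i<NN n. indicator {bb n i..bb n i + dd n} x)
        + (\<Sum>i<NN n. indicator {bb n i + RR n..bb n i + RR n + dd n} x)) = 
        ennreal (\<Sum>i<NN n. indicator {bb n i..bb n i + dd n} x)
        + ennreal (\<Sum>i<NN n. indicator {bb n i + RR n..bb n i + RR n + dd n} x)"
        by (rule ennreal_plus) (auto intro: sum_nonneg)
      moreover have "ennreal (hh n * ((\<Sum>i<NN n. indicator {bb n i..bb n i + dd n} x)
        + (\<Sum>i<NN n. indicator {bb n i + RR n..bb n i + RR n + dd n} x))) = ennreal (hh n) * ennreal ((\<Sum>i<NN n. indicator {bb n i..bb n i + dd n} x)
        + (\<Sum>i<NN n. indicator {bb n i + RR n..bb n i + RR n + dd n} x))"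
        using hh_pos[of n] by (intro ennreal_mult) (auto intro!: add_nonneg_nonneg sum_nonneg)
      ultimately show ?thesis by (simp only: ennreal_sum_ind)
    qed
    finally have "ennreal \<bar>fg n x\<bar> * Q w x \<le> ennreal (hh n) * ((\<Sum>i<NN n. indicator {bb n i..bb n i + dd n} x)
        + (\<Sum>i<NN n. indicator {bb n i + RR n..bb n i + RR n + dd n} x)) * Q w x"
      by (rule mult_right_mono) simp
    thus "ennreal \<bar>fg n x\<bar> * Q w x \<le> ennreal (hh n) * ((\<Sum>i<NN n. indicator {bb n i..bb n i + dd n} x * Q w x)
          + (\<Sum>i<NN n. indicator {bb n i + RR n..bb n i + RR n + dd n} x * Q w x))"
      by (simp add: sum_distrib_right distrib_right mult.assoc)
  qed
  also have "\<dots> = ennreal (hh n) * ((\<Sum>i<NN n. \<integral>\<^sup>+x. indicator {bb n i..bb n i + dd n} x * Q w x \<partial>lborel)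
          + (\<Sum>i<NN n. \<integral>\<^sup>+x. indicator {bb n i + RR n..bb n i + RR n + dd n} x * Q w x \<partial>lborel))"
    by (subst nn_integral_cmult, measurable, subst nn_integral_add, measurable,
        subst (1 2) nn_integral_sum, auto)
  also have "\<dots> \<le> ennreal (hh n) * (ennreal E + ennreal E)"
  proof -
    have a: "(\<Sum>i<NN n. \<integral>\<^sup>+x. indicator {bb n i..bb n i + dd n} x * Q w x \<partial>lborel) \<le> ennreal E"
      using AP_group[of "aa n + 2 * RR n" n w] unfolding E_def bb_def by (simp add: algebra_simps)
    have b: "(\<Sum>i<NN n. \<integral>\<^sup>+x. indicator {bb n i + RR n..bb n i + RR n + dd n} x * Q w x \<partial>lborel) \<le> ennreal E"
      using AP_group[of "aa n + 3 * RR n" n w] unfolding E_def bb_def by (simp add: algebra_simps)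
    show ?thesis by (intro mult_left_mono add_mono a b) auto
  qed
  also have "\<dots> = ennreal (hh n * (2 * E))"
    using E0 hh_pos[of n] by (simp add: ennreal_mult[symmetric] ennreal_plus[symmetric] del: ennreal_plus)
  also have "\<dots> \<le> ennreal (108 * lam n)"
  proof (rule ennreal_leI)
    have "hh n * (2 * E) = 30 * (hh n * sqrt (dd n)) + 24 * (hh n * dd n / (PP n - dd n))"
      unfolding E_def by (simp add: algebra_simps)
    also have "\<dots> \<le> 30 * (2 * lam n) + 24 * (2 * lam n)"
      by (intro add_mono mult_left_mono hh_sqrt_dd hh_dd_PP) auto
    finally show "hh n * (2 * E) \<le> 108 * lam n" by simp
  qed
  finally show ?thesis .
qed

lemma fg_meas[measurable]: "fg n \<in> borel_measurable borel"
  unfolding fg_def[abs_def] by measurable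

lemma Om_Q: "(\<integral>\<^sup>+x. ennreal \<bar>Om x\<bar> * Q w x \<partial>lborel) \<le> ennreal (108 * suminf lam)"
proof -
  have "(\<integral>\<^sup>+x. ennreal \<bar>Om x\<bar> * Q w x \<partial>lborel) \<le> (\<integral>\<^sup>+x. (\<Sum>n. ennreal \<bar>fg n x\<bar> * Q w x) \<partial>lborel)"
  proof (intro nn_integral_mono)
    fix x
    show "ennreal \<bar>Om x\<bar> * Q w x \<le> (\<Sum>n. ennreal \<bar>fg n x\<bar> * Q w x)"
    proof (cases "Om x = 0")
      case True thus ?thesis by simp
    next
      case False
      then obtain n where n: "Om x = fg n x" using Om_nz by blast
      have "(\<Sum>m\<in>{n}. ennreal \<bar>fg m x\<bar> * Q w x) \<le> (\<Sum>m. ennreal \<bar>fg m x\<bar> * Q w x)"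
        by (rule sum_le_suminf) auto
      thus ?thesis using n by simp
    qed
  qed
  also have "\<dots> = (\<Sum>n. \<integral>\<^sup>+x. ennreal \<bar>fg n x\<bar> * Q w x \<partial>lborel)"
    by (rule nn_integral_suminf) measurable
  also have "\<dots> \<le> (\<Sum>n. ennreal (108 * lam n))" by (intro suminf_le fg_Q) auto
  also have "\<dots> = ennreal (\<Sum>n. 108 * lam n)"
    by (rule suminf_ennreal2) (use lam_pos in \<open>auto intro: less_imp_le summable_mult summable_lam\<close>)
  also have "(\<Sum>n. 108 * lam n) = 108 * suminf lam" by (rule suminf_mult[OF summable_lam])
  finally show ?thesis .
qed

lemma cos_q1: "\<bar>cos (2 * pi * (1/4 + v))\<bar> = \<bar>sin (2 * pi * v)\<bar>"
proof -
  have "2 * pi * (1/4+v) = pi/2 + 2 * pi * v" by (simp add: algebra_simps)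
  thus ?thesis by (simp only: cos_add cos_diff sin_add sin_diff cos_pi sin_pi cos_pi_half sin_pi_half cos_minus sin_minus, simp?)
qed
lemma cos_q3: "\<bar>cos (2 * pi * (3/4 + v))\<bar> = \<bar>sin (2 * pi * v)\<bar>"
proof -
  have "2 * pi * (3/4+v) = pi + (pi/2 + 2 * pi * v)" by (simp add: algebra_simps)
  thus ?thesis by (simp only: cos_add cos_diff sin_add sin_diff cos_pi sin_pi cos_pi_half sin_pi_half cos_minus sin_minus, simp?)
qed
lemma cos_qm1: "\<bar>cos (2 * pi * (-1/4 + v))\<bar> = \<bar>sin (2 * pi * v)\<bar>"
proof -
  have "2 * pi * (-1/4+v) = -(pi/2) + 2 * pi * v" by (simp add: algebra_simps)
  thus ?thesis by (simp only: cos_add cos_diff sin_add sin_diff cos_pi sin_pi cos_pi_half sin_pi_half cos_minus sin_minus, simp?)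
qed
lemma cos_qm3: "\<bar>cos (2 * pi * (-3/4 + v))\<bar> = \<bar>sin (2 * pi * v)\<bar>"
proof -
  have "2 * pi * (-3/4+v) = -pi + (-(pi/2) + 2 * pi * v)" by (simp add: algebra_simps)
  thus ?thesis by (simp only: cos_add cos_diff sin_add sin_diff cos_pi sin_pi cos_pi_half sin_pi_half cos_minus sin_minus, simp?)
qed
lemma sin_half: assumes "0 \<le> y" "y \<le> pi/2" shows "y/2 \<le> sin y"
proof -
  have "\<bar>sin y - (\<Sum>m<3. sin_coeff m * y ^ m)\<bar> \<le> inverse (fact 3) * \<bar>y\<bar> ^ 3" by (rule Maclaurin_sin_bound)
  hence h: "\<bar>sin y - y\<bar> \<le> y^3/6" using assms by (simp add: sin_coeff_def eval_nat_numeral fact_numeral)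
  have "pi \<le> 3.2" using pi_approx(2) by simp
  hence y16: "y \<le> 1.6" using assms by linarith
  have "y * y \<le> 1.6 * 1.6" by (rule mult_mono[OF y16 y16]) (use assms in auto)
  hence "y * (y * y) \<le> y * 3" using assms by (intro mult_left_mono) auto
  hence "y^3/6 \<le> y/2" by (simp add: power3_eq_cube)
  thus ?thesis using h by linarith
qed

lemma sin_lower: assumes "\<bar>v\<bar> \<le> 1/4" shows "\<bar>v\<bar> \<le> \<bar>sin (2 * pi * v)\<bar>"
proof -
  have a: "\<bar>sin (2 * pi * v)\<bar> = sin (2 * pi * \<bar>v\<bar>)"
  proof (cases "0 \<le> v")
    case True
    hence "0 \<le> sin (2 * pi * v)" using assms by (intro sin_ge_zero) auto
    thus ?thesis using True by simp
  next
    case False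
    hence v: "0 \<le> -v" "-v \<le> 1/4" using assms by auto
    have "2 * pi * (-v) \<le> 2 * pi * (1/4)" using v pi_gt_zero by (intro mult_left_mono) auto
    moreover have "0 \<le> 2 * pi * (-v)" using v pi_gt_zero by (intro mult_nonneg_nonneg) auto
    ultimately have "0 \<le> sin (2 * pi * (-v))" by (intro sin_ge_zero) auto
    moreover have "pi * v \<le> 0" using v pi_gt_zero by (intro mult_nonneg_nonpos) auto
    ultimately show ?thesis using False by simp
  qed
  have "(2 * pi * \<bar>v\<bar>) / 2 \<le> sin (2 * pi * \<bar>v\<bar>)" using assms by (intro sin_half) auto
  moreover have "\<bar>v\<bar> \<le> (2 * pi * \<bar>v\<bar>) / 2" using pi_gt3 by (simp add: mult_le_cancel_right1)
  ultimately show ?thesis using a by linarith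
qed

lemma log_pow_bound: fixes al y :: real assumes "0 < al" "0 < y" "y \<le> 1"
  shows "ln (1/y) powr (1+al) \<le> (2*(1+al)) powr (1+al) * y powr (-1/2)"
proof -
  define be where "be = 2*(1+al)"
  define Y where "Y = 1/y"
  have be: "0 < be" using assms by (simp add: be_def)
  have Y: "1 \<le> Y" using assms by (simp add: Y_def)
  have "ln (Y powr (1/be)) \<le> Y powr (1/be) - 1" using Y by (intro ln_le_minus_one) auto
  moreover have "ln (Y powr (1/be)) = (1/be) * ln Y" using Y by (simp add: ln_powr)
  ultimately have "ln Y \<le> be * Y powr (1/be)" using be by (simp add: field_simps)
  moreover have "0 \<le> ln Y" using Y by simp
  ultimately have "ln Y powr (1+al) \<le> (be * Y powr (1/be)) powr (1+al)"
    using assms by (intro powr_mono2) auto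
  also have "\<dots> = be powr (1+al) * (Y powr (1/be)) powr (1+al)"
    using be by (simp add: powr_mult)
  also have "(Y powr (1/be)) powr (1+al) = Y powr (1/2)"
  proof -
    have e1: "1/be * (1+al) = 1/2" using assms by (simp add: be_def field_simps)
    have e2: "(Y powr (1/be)) powr (1+al) = Y powr (1/be * (1+al))" by (rule powr_powr)
    show ?thesis unfolding e2 e1 ..
  qed
  also have "Y powr (1/2) = y powr (-1/2)"
    using assms by (simp add: Y_def powr_divide powr_minus_divide)
  finally show ?thesis unfolding Y_def be_def .
qed

lemma cosL: fixes u al :: real assumes "0 < al" "-1 \<le> u" "u \<le> 1"
  shows "\<exists>z\<in>{-3/4,-1/4,1/4,3/4::real}. ln (1/\<bar>cos (2 * pi * u)\<bar>) powr (1+al) \<le> (2*(1+al)) powr (1+al) * \<bar>u - z\<bar> powr (-1/2)"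
proof -
  obtain z where z: "z \<in> {-3/4,-1/4,1/4,3/4::real}" "\<bar>u - z\<bar> \<le> 1/4" "\<bar>cos (2 * pi * u)\<bar> = \<bar>sin (2 * pi * (u - z))\<bar>"
  proof (cases "u \<le> -1/2")
    case True
    have "\<bar>cos (2 * pi * u)\<bar> = \<bar>sin (2 * pi * (u - (-3/4)))\<bar>" using cos_qm3[of "u - (-3/4)"] by simp
    moreover have "\<bar>u - -3/4\<bar> \<le> 1/4" using True assms by arith
 ultimately show ?thesis by (intro that[of "-3/4"]) auto
  next
    case F1: False
    show ?thesis
    proof (cases "u \<le> 0")
      case True
      have "\<bar>cos (2 * pi * u)\<bar> = \<bar>sin (2 * pi * (u - (-1/4)))\<bar>" using cos_qm1[of "u - (-1/4)"] by simp
      moreover have "\<bar>u - -1/4\<bar> \<le> 1/4" using True F1 by arith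
 ultimately show ?thesis by (intro that[of "-1/4"]) auto
    next
      case F2: False
      show ?thesis
      proof (cases "u \<le> 1/2")
        case True
        have "\<bar>cos (2 * pi * u)\<bar> = \<bar>sin (2 * pi * (u - 1/4))\<bar>" using cos_q1[of "u - 1/4"] by simp
        moreover have "\<bar>u - 1/4\<bar> \<le> 1/4" using True F2 by arith
 ultimately show ?thesis by (intro that[of "1/4"]) auto
      next
        case False
        have "\<bar>cos (2 * pi * u)\<bar> = \<bar>sin (2 * pi * (u - 3/4))\<bar>" using cos_q3[of "u - 3/4"] by simp
        moreover have "\<bar>u - 3/4\<bar> \<le> 1/4" using False assms by arith
 ultimately show ?thesis by (intro that[of "3/4"]) auto
      qed
    qed
  qed
  define C where "C = (2*(1+al)) powr (1+al)"
  have C0: "0 \<le> C" unfolding C_def by simp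
  have "ln (1/\<bar>cos (2 * pi * u)\<bar>) powr (1+al) \<le> C * \<bar>u - z\<bar> powr (-1/2)"
  proof (cases "u - z = 0")
    case True
    hence "cos (2 * pi * u) = 0" using z(3) by simp
    thus ?thesis using C0 by simp
  next
    case False
    have v: "\<bar>u - z\<bar> \<le> \<bar>cos (2 * pi * u)\<bar>" using sin_lower[OF z(2)] z(3) by simp
    have vp: "0 < \<bar>u - z\<bar>" using False by simp
    have c1: "\<bar>cos (2 * pi * u)\<bar> \<le> 1" by simp
    have "ln (1/\<bar>cos (2 * pi * u)\<bar>) \<le> ln (1/\<bar>u - z\<bar>)"
      using v vp by (subst ln_le_cancel_iff) (auto simp: frac_le)
    moreover have "0 \<le> ln (1/\<bar>cos (2 * pi * u)\<bar>)" using c1 v vp by simp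
    ultimately have "ln (1/\<bar>cos (2 * pi * u)\<bar>) powr (1+al) \<le> ln (1/\<bar>u - z\<bar>) powr (1+al)"
      using assms by (intro powr_mono2) auto
    also have "\<dots> \<le> C * \<bar>u - z\<bar> powr (-1/2)" unfolding C_def
      by (rule log_pow_bound) (use assms vp z(2) in auto)
    finally show ?thesis .
  qed
  thus ?thesis using z(1) unfolding C_def by blast
qed

lemma log_cond: fixes al :: real assumes "0 < al"
  shows "(SUP t\<in>{0..1}. \<integral>\<^sup>+ x\<in>{0..1}.
            ennreal (\<bar>Om x\<bar> * (ln (1 / \<bar>cos (2 * pi * (x - t))\<bar>)) powr (1 + al)) \<partial>lborel) < \<infinity>"
proof -
  define C where "C = (2*(1+al)) powr (1+al)"
  define B where "B = ennreal (108 * suminf lam)"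
  have bound: "(\<integral>\<^sup>+ x\<in>{0..1}. ennreal (\<bar>Om x\<bar> * (ln (1 / \<bar>cos (2 * pi * (x - t))\<bar>)) powr (1 + al)) \<partial>lborel)
      \<le> ennreal C * (B + B + B + B)" if t: "t \<in> {0..1}" for t
  proof -
    have "(\<integral>\<^sup>+ x\<in>{0..1}. ennreal (\<bar>Om x\<bar> * (ln (1 / \<bar>cos (2 * pi * (x - t))\<bar>)) powr (1 + al)) \<partial>lborel)
      \<le> (\<integral>\<^sup>+ x. ennreal C * (ennreal \<bar>Om x\<bar> * Q (t + -3/4) x + ennreal \<bar>Om x\<bar> * Q (t + -1/4) x
           + ennreal \<bar>Om x\<bar> * Q (t + 1/4) x + ennreal \<bar>Om x\<bar> * Q (t + 3/4) x) \<partial>lborel)"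
    proof (intro nn_integral_mono)
      fix x
      show "ennreal (\<bar>Om x\<bar> * (ln (1 / \<bar>cos (2 * pi * (x - t))\<bar>)) powr (1 + al)) * indicator {0..1} x
        \<le> ennreal C * (ennreal \<bar>Om x\<bar> * Q (t + -3/4) x + ennreal \<bar>Om x\<bar> * Q (t + -1/4) x
           + ennreal \<bar>Om x\<bar> * Q (t + 1/4) x + ennreal \<bar>Om x\<bar> * Q (t + 3/4) x)"
      proof (cases "x \<in> {0..1}")
        case False thus ?thesis by simp
      next
        case True
        have "\<exists>z\<in>{-3/4,-1/4,1/4,3/4::real}. ln (1/\<bar>cos (2 * pi * (x - t))\<bar>) powr (1+al) \<le> C * \<bar>(x - t) - z\<bar> powr (-1/2)"
          unfolding C_def by (rule cosL[OF assms]) (use True t in auto)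
        then obtain z where z: "z \<in> {-3/4,-1/4,1/4,3/4::real}"
          "ln (1/\<bar>cos (2 * pi * (x - t))\<bar>) powr (1+al) \<le> C * \<bar>(x - t) - z\<bar> powr (-1/2)"
          by blast
        have "ennreal (\<bar>Om x\<bar> * (ln (1 / \<bar>cos (2 * pi * (x - t))\<bar>)) powr (1 + al))
            \<le> ennreal (\<bar>Om x\<bar> * (C * \<bar>(x - t) - z\<bar> powr (-1/2)))"
          by (intro ennreal_leI mult_left_mono z(2)) auto
        also have "\<dots> = ennreal C * (ennreal \<bar>Om x\<bar> * Q (t + z) x)"
          unfolding Q_def using C_def by (simp add: ennreal_mult[symmetric] algebra_simps del: ennreal_mult)
        also have "\<dots> \<le> ennreal C * (ennreal \<bar>Om x\<bar> * Q (t + -3/4) x + ennreal \<bar>Om x\<bar> * Q (t + -1/4) x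
           + ennreal \<bar>Om x\<bar> * Q (t + 1/4) x + ennreal \<bar>Om x\<bar> * Q (t + 3/4) x)"
        proof (intro mult_left_mono)
          have "Q (t+z) x \<in> {Q (t + -3/4) x, Q (t + -1/4) x, Q (t + 1/4) x, Q (t + 3/4) x}" using z(1) by blast
          thus "ennreal \<bar>Om x\<bar> * Q (t + z) x \<le> ennreal \<bar>Om x\<bar> * Q (t + -3/4) x + ennreal \<bar>Om x\<bar> * Q (t + -1/4) x
           + ennreal \<bar>Om x\<bar> * Q (t + 1/4) x + ennreal \<bar>Om x\<bar> * Q (t + 3/4) x"
            by (elim insertE) (auto simp: add_increasing add_increasing2)
        qed simp
        finally show ?thesis using True by simp
      qed
    qed
    also have "\<dots> = ennreal C * ((\<integral>\<^sup>+x. ennreal \<bar>Om x\<bar> * Q (t + -3/4) x \<partial>lborel) + (\<integral>\<^sup>+x. ennreal \<bar>Om x\<bar> * Q (t + -1/4) x \<partial>lborel)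
          + (\<integral>\<^sup>+x. ennreal \<bar>Om x\<bar> * Q (t + 1/4) x \<partial>lborel) + (\<integral>\<^sup>+x. ennreal \<bar>Om x\<bar> * Q (t + 3/4) x \<partial>lborel))"
      using Om_integrable by (simp add: nn_integral_cmult nn_integral_add)
    also have "\<dots> \<le> ennreal C * (B + B + B + B)"
      unfolding B_def by (intro mult_left_mono add_mono Om_Q) auto
    finally show ?thesis .
  qed
  have "(SUP t\<in>{0..1}. \<integral>\<^sup>+ x\<in>{0..1}.
            ennreal (\<bar>Om x\<bar> * (ln (1 / \<bar>cos (2 * pi * (x - t))\<bar>)) powr (1 + al)) \<partial>lborel) \<le> ennreal C * (B + B + B + B)"
    by (rule SUP_least) (rule bound)
  also have "\<dots> < \<infinity>" unfolding B_def by (simp add: ennreal_mult_less_top ennreal_plus[symmetric] del: ennreal_plus)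
  finally show ?thesis .
qed

lemma ind_div_int: assumes "x < a \<or> a + dl < x"
  shows "integrable lborel (\<lambda>y. indicator {a..a+dl} y / (x - y) :: real)"
proof -
  have "continuous_on {a..a+dl} (\<lambda>y. 1 / (x - y))"
    using assms by (intro continuous_intros) auto
  hence "integrable lborel (\<lambda>y. indicator {a..a+dl} y *\<^sub>R (1 / (x - y)))"
    by (intro borel_integrable_compact) auto
  thus ?thesis by simp
qed

lemma ind_kern_int: assumes "x < a \<or> a + R + dl < x" "0 < R" "0 < dl"
  shows "integrable lborel (\<lambda>y. indicator {a..a+dl} y * (1 / (x - y) - 1 / (x - R - y)) :: real)"
proof -
  have "continuous_on {a..a+dl} (\<lambda>y. 1 / (x - y) - 1 / (x - R - y))"
    using assms by (intro continuous_intros) auto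
  hence "integrable lborel (\<lambda>y. indicator {a..a+dl} y *\<^sub>R (1 / (x - y) - 1 / (x - R - y)))"
    by (intro borel_integrable_compact) auto
  thus ?thesis by simp
qed

lemma blk_int: assumes "x < a \<or> a + R + dl < x" "0 < R" "0 < dl"
  shows blk_integrable: "integrable lborel (\<lambda>y. (indicator {a..a+dl} y - indicator {a+R..a+R+dl} y) / (x - y) :: real)"
    and blk_integral: "(\<integral>y. (indicator {a..a+dl} y - indicator {a+R..a+R+dl} y) / (x - y) \<partial>lborel)
        = (\<integral>y. indicator {a..a+dl} y * (1 / (x - y) - 1 / (x - R - y)) \<partial>lborel)"
proof -
  have i1: "integrable lborel (\<lambda>y. indicator {a..a+dl} y / (x - y) :: real)"
    by (rule ind_div_int) (use assms in auto)
  have i2: "integrable lborel (\<lambda>y. indicator {a+R..a+R+dl} y / (x - y) :: real)"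
    by (rule ind_div_int) (use assms in auto)
  show "integrable lborel (\<lambda>y. (indicator {a..a+dl} y - indicator {a+R..a+R+dl} y) / (x - y) :: real)"
    using Bochner_Integration.integrable_diff[OF i1 i2] by (simp add: diff_divide_distrib)
  have "(\<integral>y. (indicator {a..a+dl} y - indicator {a+R..a+R+dl} y) / (x - y) \<partial>lborel)
     = (\<integral>y. indicator {a..a+dl} y / (x - y) \<partial>lborel) - (\<integral>y. indicator {a+R..a+R+dl} y / (x - y) \<partial>lborel)"
    using i1 i2 by (simp add: diff_divide_distrib)
  also have "(\<integral>y. indicator {a+R..a+R+dl} y / (x - y) \<partial>lborel) = (\<integral>y. indicator {a+R..a+R+dl} (R + 1 * y) / (x - (R + 1 * y)) \<partial>lborel)"
    using lborel_integral_real_affine[of 1 "\<lambda>y. indicator {a+R..a+R+dl} y / (x - y) :: real" R] by simp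
  also have "\<dots> = (\<integral>y. indicator {a..a+dl} y / (x - R - y) \<partial>lborel)"
    by (intro Bochner_Integration.integral_cong) (auto simp: indicator_def algebra_simps)
  also have "(\<integral>y. indicator {a..a+dl} y / (x - y) \<partial>lborel) - (\<integral>y. indicator {a..a+dl} y / (x - R - y) \<partial>lborel)
     = (\<integral>y. indicator {a..a+dl} y / (x - y) - indicator {a..a+dl} y / (x - R - y) \<partial>lborel)"
    using i1 by (intro Bochner_Integration.integral_diff[symmetric] ind_div_int) (use assms in auto)
  also have "\<dots> = (\<integral>y. indicator {a..a+dl} y * (1 / (x - y) - 1 / (x - R - y)) \<partial>lborel)"
    by (intro Bochner_Integration.integral_cong) (auto simp: indicator_def)
  finally show "(\<integral>y. (indicator {a..a+dl} y - indicator {a+R..a+R+dl} y) / (x - y) \<partial>lborel)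
        = (\<integral>y. indicator {a..a+dl} y * (1 / (x - y) - 1 / (x - R - y)) \<partial>lborel)" .
qed

lemma kern_nonpos: fixes x y R :: real assumes "0 < R" "x < y \<or> y + R < x"
  shows "1 / (x - y) - 1 / (x - R - y) \<le> 0"
  using assms
proof (cases "x < y")
  case True
  hence h: "x - R - y < 0" "x - y < 0" using assms by auto
  hence "1 / (x - y) - 1 / (x - R - y) = - (R / ((x - y) * (x - R - y)))" by (simp add: field_simps)
  moreover have "0 < (x - y) * (x - R - y)" using h by (intro mult_neg_neg) auto
  ultimately show ?thesis using assms by simp
next
  case False
  hence "0 < x - R - y" "x - R - y \<le> x - y" using assms by auto
  thus ?thesis by (simp add: frac_le)
qed

lemma kern_upper: fixes x y R u :: real
  assumes "0 < R" "0 < y - x" "y - x \<le> u" "u \<le> R"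
  shows "1 / (x - y) - 1 / (x - R - y) \<le> - 1 / (2 * u)"
proof -
  define v where "v = y - x"
  have v: "0 < v" "v \<le> u" using assms by (auto simp: v_def)
  have "1 / (x - y) - 1 / (x - R - y) = - (R / (v * (v + R)))"
    unfolding v_def using assms by (simp add: field_simps)
  moreover have "1 / (2 * u) \<le> R / (v * (v + R))"
  proof -
    have "v * (v + R) \<le> u * (2 * R)" using v assms by (intro mult_mono) auto
    thus ?thesis using v assms by (simp add: divide_simps) (simp add: algebra_simps)
  qed
  ultimately show ?thesis by simp
qed

definition gap :: "nat \<Rightarrow> nat \<Rightarrow> real set" where
  "gap n i = {bb n i - RR n + dd n .. bb n i - dd n}"

lemma bb_mono: assumes "i < j" shows "bb n i + PP n \<le> bb n j"
proof -
  have "real i + 1 \<le> real j" using assms by linarith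
  hence "(real i + 1) * PP n \<le> real j * PP n" using PP_pos[of n] by (intro mult_right_mono) auto
  thus ?thesis by (simp add: bb_def algebra_simps)
qed

lemma sep: assumes x: "x \<in> gap n i" and i: "i < NN n" and j: "j < NN m"
  shows "bb n i \<le> bb m j \<or> bb m j + RR m + dd m \<le> 2 * x - bb n i"
proof -
  have x1: "bb n i - RR n + dd n \<le> x" and x2: "x \<le> bb n i - dd n" using x by (auto simp: gap_def)
  have ddn: "0 < dd n" "2 * dd n \<le> RR n" using dd_pos dd_le by auto
  have ddm: "0 < dd m" "2 * dd m \<le> RR m" using dd_pos dd_le by auto
  consider "m = n" | "m < n" | "n < m" by linarith
  thus ?thesis
  proof cases
    case 1
    show ?thesis
    proof (cases "i \<le> j")
      case True
      thus ?thesis using 1 bb_mono[of i j n] PP_pos[of n] by (cases "i = j") auto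
    next
      case False
      hence "bb n j + PP n \<le> bb n i" using bb_mono[of j i n] by simp
      thus ?thesis using 1 x1 ddn PP_RR[of n] by auto
    qed
  next
    case 2
    have "bb m j + 2 * RR m \<le> aa (Suc m)" by (rule cell_hi[OF j])
    moreover have "aa (Suc m) \<le> aa n" using 2 by (intro aa_mono) auto
    moreover have "aa n + 2 * RR n \<le> bb n i" by (rule cell_lo)
    ultimately show ?thesis using x1 ddn ddm by linarith
  next
    case 3
    have "bb n i + 2 * RR n \<le> aa (Suc n)" by (rule cell_hi[OF i])
    moreover have "aa (Suc n) \<le> aa m" using 3 by (intro aa_mono) auto
    moreover have "aa m + 2 * RR m \<le> bb m j" by (rule cell_lo)
    ultimately show ?thesis using RR_pos[of n] RR_pos[of m] by linarith
  qed
qed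

lemma sep_lt: assumes x: "x \<in> gap n i" and i: "i < NN n" and j: "j < NN m"
  shows "x < bb m j \<or> bb m j + RR m + dd m < x"
proof -
  have "x \<le> bb n i - dd n" using x by (auto simp: gap_def)
  thus ?thesis using sep[OF assms] dd_pos[of n] by linarith
qed

lemma fg_dist: assumes x: "x \<in> gap n i" and i: "i < NN n" and y: "fg m y \<noteq> 0"
  shows "bb n i - x \<le> \<bar>x - y\<bar>"
proof -
  obtain j where j: "j < NN m" "bb m j \<le> y" "y \<le> bb m j + RR m + dd m" using fg_nz[OF y] by blast
  show ?thesis using sep[OF x i j(1)] j by linarith
qed

lemma gap_D: assumes "x \<in> gap n i" shows "dd n \<le> bb n i - x" "bb n i + dd n - x \<le> RR n"
  using assms by (auto simp: gap_def)

lemma fg_div: "fg m y / (x - y) = (\<Sum>j<NN m. hh m * ((indicator {bb m j..bb m j + dd m} y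
        - indicator {bb m j + RR m..bb m j + RR m + dd m} y) / (x - y)))"
  unfolding fg_def by (simp add: sum_divide_distrib)

lemma K_props: assumes x: "x \<in> gap n i" and i: "i < NN n"
  shows K_int: "integrable lborel (\<lambda>y. fg m y / (x - y))"
    and K_eq: "(\<integral>y. fg m y / (x - y) \<partial>lborel) = (\<Sum>j<NN m. hh m *
        (\<integral>y. indicator {bb m j..bb m j + dd m} y * (1 / (x - y) - 1 / (x - RR m - y)) \<partial>lborel))"
proof -
  have sl: "x < bb m j \<or> bb m j + RR m + dd m < x" if "j < NN m" for j using sep_lt[OF x i that] .
  have bi: "integrable lborel (\<lambda>y. (indicator {bb m j..bb m j + dd m} y
        - indicator {bb m j + RR m..bb m j + RR m + dd m} y) / (x - y) :: real)" if "j < NN m" for j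
    using blk_integrable[OF sl[OF that] RR_pos dd_pos] by simp
  have bi2: "integrable lborel (\<lambda>y. hh m * ((indicator {bb m j..bb m j + dd m} y
        - indicator {bb m j + RR m..bb m j + RR m + dd m} y) / (x - y)) :: real)" if "j < NN m" for j
    by (rule integrable_mult_right, rule bi[OF that])
  show "integrable lborel (\<lambda>y. fg m y / (x - y))"
    unfolding fg_div by (rule Bochner_Integration.integrable_sum) (rule bi2, simp)
  have "(\<integral>y. fg m y / (x - y) \<partial>lborel) = (\<Sum>j<NN m. hh m * (\<integral>y. (indicator {bb m j..bb m j + dd m} y
        - indicator {bb m j + RR m..bb m j + RR m + dd m} y) / (x - y) \<partial>lborel))"
  proof -
    have bi3: "integrable lborel (\<lambda>y. hh m * ((indicator {bb m j..bb m j + dd m} y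
        - indicator {bb m j + RR m..bb m j + RR m + dd m} y) / (x - y)) :: real)" if "j \<in> {..<NN m}" for j
      by (rule bi2) (use that in simp)
    have "(\<integral>y. fg m y / (x - y) \<partial>lborel) = (\<integral>y. (\<Sum>j<NN m. hh m * ((indicator {bb m j..bb m j + dd m} y
        - indicator {bb m j + RR m..bb m j + RR m + dd m} y) / (x - y))) \<partial>lborel)" by (simp only: fg_div)
    also have "\<dots> = (\<Sum>j<NN m. (\<integral>y. hh m * ((indicator {bb m j..bb m j + dd m} y
        - indicator {bb m j + RR m..bb m j + RR m + dd m} y) / (x - y)) \<partial>lborel))"
      by (rule Bochner_Integration.integral_sum[OF bi3])
    finally show ?thesis by (simp only: integral_mult_right_zero)
  qed
  also have "\<dots> = (\<Sum>j<NN m. hh m *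
        (\<integral>y. indicator {bb m j..bb m j + dd m} y * (1 / (x - y) - 1 / (x - RR m - y)) \<partial>lborel))"
    by (intro sum.cong refl arg_cong2[where f="(*)"]) (use blk_integral[OF sl RR_pos dd_pos] in auto)
  finally show "(\<integral>y. fg m y / (x - y) \<partial>lborel) = (\<Sum>j<NN m. hh m *
        (\<integral>y. indicator {bb m j..bb m j + dd m} y * (1 / (x - y) - 1 / (x - RR m - y)) \<partial>lborel))" .
qed

lemma blk_nonpos: assumes x: "x \<in> gap n i" and i: "i < NN n" and j: "j < NN m"
  shows "(\<integral>y. indicator {bb m j..bb m j + dd m} y * (1 / (x - y) - 1 / (x - RR m - y)) \<partial>lborel) \<le> 0"
proof -
  have sl: "x < bb m j \<or> bb m j + RR m + dd m < x" using sep_lt[OF x i j] .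
  have "0 \<le> (\<integral>y. - (indicator {bb m j..bb m j + dd m} y * (1 / (x - y) - 1 / (x - RR m - y))) \<partial>lborel)"
  proof (rule Bochner_Integration.integral_nonneg)
    fix y
    show "0 \<le> - (indicator {bb m j..bb m j + dd m} y * (1 / (x - y) - 1 / (x - RR m - y)))"
    proof (cases "y \<in> {bb m j..bb m j + dd m}")
      case True
      have "x < y \<or> y + RR m < x" using sl True by auto
      thus ?thesis using True kern_nonpos[OF RR_pos] by auto
    qed simp
  qed
  thus ?thesis by simp
qed

lemma K_nonpos: assumes x: "x \<in> gap n i" and i: "i < NN n"
  shows "(\<integral>y. fg m y / (x - y) \<partial>lborel) \<le> 0"
  unfolding K_eq[OF x i]
  by (intro sum_nonpos mult_nonneg_nonpos less_imp_le[OF hh_pos] blk_nonpos[OF x i]) auto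

lemma K_own: assumes x: "x \<in> gap n i" and i: "i < NN n"
  shows "(\<integral>y. fg n y / (x - y) \<partial>lborel) \<le> - (hh n * dd n) / (2 * (bb n i + dd n - x))"
proof -
  define u where "u = bb n i + dd n - x"
  have D: "dd n \<le> bb n i - x" "u \<le> RR n" using gap_D[OF x] by (auto simp: u_def)
  have u0: "0 < u" using D dd_pos[of n] by (simp add: u_def)
  have sl: "x < bb n i \<or> bb n i + RR n + dd n < x" using sep_lt[OF x i i] .
  have own: "(\<integral>y. indicator {bb n i..bb n i + dd n} y * (1 / (x - y) - 1 / (x - RR n - y)) \<partial>lborel)
      \<le> (\<integral>y. indicator {bb n i..bb n i + dd n} y * (- 1 / (2 * u)) \<partial>lborel)"
  proof (rule Bochner_Integration.integral_mono)
    show "integrable lborel (\<lambda>y. indicator {bb n i..bb n i + dd n} y * (1 / (x - y) - 1 / (x - RR n - y)))"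
      by (rule ind_kern_int) (use sl RR_pos dd_pos in auto)
    show "integrable lborel (\<lambda>y. indicator {bb n i..bb n i + dd n} y * (- 1 / (2 * u)) :: real)"
      using Icc_int by simp
    fix y
    show "indicator {bb n i..bb n i + dd n} y * (1 / (x - y) - 1 / (x - RR n - y))
       \<le> indicator {bb n i..bb n i + dd n} y * (- 1 / (2 * u))"
    proof (cases "y \<in> {bb n i..bb n i + dd n}")
      case True
      have "1 / (x - y) - 1 / (x - RR n - y) \<le> - 1 / (2 * u)"
        by (rule kern_upper[OF RR_pos]) (use True D dd_pos[of n] in \<open>auto simp: u_def\<close>)
      thus ?thesis using True by simp
    qed simp
  qed
  also have "\<dots> = - dd n / (2 * u)" using dd_pos[of n] by simp
  finally have own2: "hh n * (\<integral>y. indicator {bb n i..bb n i + dd n} y * (1 / (x - y) - 1 / (x - RR n - y)) \<partial>lborel)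
      \<le> hh n * (- dd n / (2 * u))" using hh_pos[of n] by (intro mult_left_mono) auto
  have "(\<integral>y. fg n y / (x - y) \<partial>lborel) = (\<Sum>j<NN n. hh n *
        (\<integral>y. indicator {bb n j..bb n j + dd n} y * (1 / (x - y) - 1 / (x - RR n - y)) \<partial>lborel))"
    by (rule K_eq[OF x i])
  also have "\<dots> = hh n * (\<integral>y. indicator {bb n i..bb n i + dd n} y * (1 / (x - y) - 1 / (x - RR n - y)) \<partial>lborel)
     + (\<Sum>j\<in>{..<NN n} - {i}. hh n *
        (\<integral>y. indicator {bb n j..bb n j + dd n} y * (1 / (x - y) - 1 / (x - RR n - y)) \<partial>lborel))"
    using i by (subst sum.remove[of _ i]) auto
  also have "\<dots> \<le> hh n * (- dd n / (2 * u)) + 0"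
    by (intro add_mono own2 sum_nonpos mult_nonneg_nonpos less_imp_le[OF hh_pos] blk_nonpos[OF x i]) auto
  finally show ?thesis unfolding u_def by simp
qed

lemma H0_bound: assumes x: "x \<in> gap n i" and i: "i < NN n"
  shows "(\<integral>y. Om y / (x - y) \<partial>lborel) \<le> - (hh n * dd n) / (2 * (bb n i + dd n - x))"
proof -
  define D where "D = bb n i - x"
  have D: "0 < D" using gap_D(1)[OF x] dd_pos[of n] by (simp add: D_def)
  define f where "f m y = fg m y / (x - y)" for m y
  have fi: "integrable lborel (f m)" for m unfolding f_def[abs_def] by (rule K_int[OF x i])
  have s1: "summable (\<lambda>m. norm (f m y))" for y
    by (rule summable_finite[OF fg_fin[of y]]) (auto simp: f_def)
  have fb: "(\<integral>y. norm (f m y) \<partial>lborel) \<le> 2 * lam m ^ 2 / D" for m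
  proof -
    have "(\<integral>y. norm (f m y) \<partial>lborel) \<le> (\<integral>y. \<bar>fg m y\<bar> / D \<partial>lborel)"
    proof (rule Bochner_Integration.integral_mono)
      show "integrable lborel (\<lambda>y. norm (f m y))" by (rule integrable_norm[OF fi])
      show "integrable lborel (\<lambda>y. \<bar>fg m y\<bar> / D)" using fg_integrable[of m] by simp
      fix y
      show "norm (f m y) \<le> \<bar>fg m y\<bar> / D"
      proof (cases "fg m y = 0")
        case False
        have "D \<le> \<bar>x - y\<bar>" using fg_dist[OF x i False] by (simp add: D_def)
        thus ?thesis using D unfolding f_def by (simp add: abs_div frac_le)
      qed (simp add: f_def)
    qed
    also have "\<dots> = (\<integral>y. \<bar>fg m y\<bar> \<partial>lborel) / D" by simp
    also have "\<dots> \<le> 2 * lam m ^ 2 / D" using D by (intro divide_right_mono fg_abs_int) auto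
    finally show ?thesis .
  qed
  have s2: "summable (\<lambda>m. (\<integral>y. norm (f m y) \<partial>lborel))"
  proof (rule summable_comparison_test[OF _ summable_divide[OF summable_mult[OF summable_lam2, of 2], of D]])
    show "\<exists>N. \<forall>m\<ge>N. norm (\<integral>y. norm (f m y) \<partial>lborel) \<le> 2 * lam m ^ 2 / D"
      using fb by (auto intro!: exI[of _ 0])
  qed
  have ie: "(\<integral>y. (\<Sum>m. f m y) \<partial>lborel) = (\<Sum>m. integral\<^sup>L lborel (f m))"
    by (rule integral_suminf[OF fi]) (use s1 s2 in auto)
  have sK: "summable (\<lambda>m. integral\<^sup>L lborel (f m))"
    by (rule summable_integral[OF fi]) (use s1 s2 in auto)
  have omf: "Om y / (x - y) = (\<Sum>m. f m y)" for y
  proof -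
    have "summable (\<lambda>m. fg m y)" by (rule summable_finite[OF fg_fin[of y]]) auto
    thus ?thesis unfolding Om_def f_def by (rule suminf_divide[symmetric])
  qed
  have "(\<integral>y. Om y / (x - y) \<partial>lborel) = (\<Sum>m. integral\<^sup>L lborel (f m))" unfolding omf ie ..
  also have "\<dots> \<le> integral\<^sup>L lborel (f n)"
  proof -
    have "(\<Sum>m\<in>{n}. - integral\<^sup>L lborel (f m)) \<le> (\<Sum>m. - integral\<^sup>L lborel (f m))"
      by (rule sum_le_suminf) (use sK K_nonpos[OF x i] in \<open>auto simp: f_def[abs_def] summable_minus_iff\<close>)
    also have "\<dots> = - (\<Sum>m. integral\<^sup>L lborel (f m))" by (rule suminf_minus[OF sK])
    finally show ?thesis by simp
  qed
  also have "\<dots> \<le> - (hh n * dd n) / (2 * (bb n i + dd n - x))" unfolding f_def[abs_def] by (rule K_own[OF x i])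
  finally show ?thesis .
qed

lemma log_int: fixes c b dl R :: real
  assumes "0 < dl" "2 * dl \<le> R" "0 \<le> c"
  shows "(\<integral>\<^sup>+x. ennreal (c / (b + dl - x)) * indicator {b - R + dl..b - dl} x \<partial>lborel) = ennreal (c * ln (R / (2 * dl)))"
proof -
  define F where "F x = - c * ln (b + dl - x)" for x
  have "((\<lambda>x. c / (b + dl - x)) has_integral (F (b - dl) - F (b - R + dl))) {b - R + dl..b - dl}"
  proof (rule fundamental_theorem_of_calculus)
    show "b - R + dl \<le> b - dl" using assms by simp
    fix x assume x: "x \<in> {b - R + dl..b - dl}"
    hence pos: "0 < b + dl - x" using assms by auto
    have "(F has_real_derivative (- c * (1 / (b + dl - x) * (0 + 0 - 1)))) (at x within {b - R + dl..b - dl})"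
      unfolding F_def using pos by (intro derivative_eq_intros) auto
    thus "(F has_vector_derivative c / (b + dl - x)) (at x within {b - R + dl..b - dl})"
      by (simp add: has_real_derivative_iff_has_vector_derivative[symmetric])
  qed
  moreover have "F (b - dl) - F (b - R + dl) = c * ln (R / (2 * dl))"
    unfolding F_def using assms by (simp add: ln_div algebra_simps)
  ultimately have h: "((\<lambda>x. c / (b + dl - x)) has_integral (c * ln (R / (2 * dl)))) {b - R + dl..b - dl}" by simp
  show ?thesis
    by (rule nn_integral_has_integral_lebesgue'[OF _ h]) (use assms in auto)
qed

lemma Om_ind: "indicator {0..1} y * Om y = Om y"
  using Om_supp[of y] by (cases "Om y = 0") auto

lemma Om_dist: assumes x: "x \<in> gap n i" and i: "i < NN n" and y: "Om y \<noteq> 0"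
  shows "bb n i - x \<le> \<bar>x - y\<bar>"
proof -
  obtain m where "fg m y \<noteq> 0" using Om_nz[OF y] by blast
  thus ?thesis by (rule fg_dist[OF x i])
qed

lemma trunc_lim: assumes x: "x \<in> gap n i" and i: "i < NN n"
  shows "((\<lambda>e. trunc_hilbert (\<lambda>y. indicator {0..1} y * Om y) e x) \<longlongrightarrow> (1/pi) * (\<integral>y. Om y / (x - y) \<partial>lborel)) (at_right 0)"
proof -
  define D where "D = bb n i - x"
  have D: "0 < D" using gap_D(1)[OF x] dd_pos[of n] by (simp add: D_def)
  have ev: "eventually (\<lambda>e. e \<in> {0<..<D}) (at_right 0)" by (rule eventually_at_right_real[OF D])
  have "eventually (\<lambda>e. (1/pi) * (\<integral>y. Om y / (x - y) \<partial>lborel) = trunc_hilbert (\<lambda>y. indicator {0..1} y * Om y) e x) (at_right 0)"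
    using ev
  proof eventually_elim
    case (elim e)
    have "(LINT y:{y. e < \<bar>x - y\<bar>}|lborel. indicator {0..1} y * Om y / (x - y)) = (\<integral>y. Om y / (x - y) \<partial>lborel)"
      unfolding set_lebesgue_integral_def
    proof (intro Bochner_Integration.integral_cong refl)
      fix y
      show "indicator {y. e < \<bar>x - y\<bar>} y *\<^sub>R (indicator {0..1} y * Om y / (x - y)) = Om y / (x - y)"
      proof (cases "Om y = 0")
        case False
        have "D \<le> \<bar>x - y\<bar>" using Om_dist[OF x i False] by (simp add: D_def)
        hence "e < \<bar>x - y\<bar>" using elim by auto
        thus ?thesis by (simp add: Om_ind)
      qed simp
    qed
    thus ?case unfolding trunc_hilbert_def by simp
  qed
  thus ?thesis by (rule Lim_transform_eventually[OF tendsto_const])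
qed

lemma gap_disj: assumes x1: "x \<in> gap n i" and i: "i < NN n" and x2: "x \<in> gap m j" and j: "j < NN m"
  shows "n = m \<and> i = j"
proof -
  have a: "bb n i \<le> bb m j"
  proof -
    have "bb n i \<le> bb m j \<or> bb m j + RR m + dd m \<le> 2 * x - bb n i" by (rule sep[OF x1 i j])
    moreover have "x \<le> bb n i - dd n" "x \<le> bb m j - dd m" using x1 x2 by (auto simp: gap_def)
    ultimately show ?thesis using dd_pos[of n] dd_pos[of m] RR_pos[of m] by linarith
  qed
  have b: "bb m j \<le> bb n i"
  proof -
    have "bb m j \<le> bb n i \<or> bb n i + RR n + dd n \<le> 2 * x - bb m j" by (rule sep[OF x2 j i])
    moreover have "x \<le> bb m j - dd m" "x \<le> bb n i - dd n" using x1 x2 by (auto simp: gap_def)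
    ultimately show ?thesis using dd_pos[of n] dd_pos[of m] RR_pos[of n] by linarith
  qed
  have eq: "bb n i = bb m j" using a b by simp
  have nm: "n = m"
  proof (rule ccontr)
    assume "n \<noteq> m"
    then consider "n < m" | "m < n" by linarith
    thus False
    proof cases
      case 1
      have "bb n i + 2 * RR n \<le> aa (Suc n)" by (rule cell_hi[OF i])
      moreover have "aa (Suc n) \<le> aa m" using 1 by (intro aa_mono) auto
      moreover have "aa m + 2 * RR m \<le> bb m j" by (rule cell_lo)
      ultimately show False using eq RR_pos[of n] RR_pos[of m] by linarith
    next
      case 2
      have "bb m j + 2 * RR m \<le> aa (Suc m)" by (rule cell_hi[OF j])
      moreover have "aa (Suc m) \<le> aa n" using 2 by (intro aa_mono) auto
      moreover have "aa n + 2 * RR n \<le> bb n i" by (rule cell_lo)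
      ultimately show False using eq RR_pos[of n] RR_pos[of m] by linarith
    qed
  qed
  have "i = j"
  proof (rule ccontr)
    assume "i \<noteq> j"
    then consider "i < j" | "j < i" by linarith
    thus False
      using bb_mono[of i j n] bb_mono[of j i n] eq nm PP_pos[of n] by cases auto
  qed
  with nm show ?thesis by simp
qed

definition phi :: "nat \<Rightarrow> nat \<Rightarrow> real \<Rightarrow> ennreal" where
  "phi n i x = ennreal (hh n * dd n / (2 * pi) / (bb n i + dd n - x)) * indicator (gap n i) x"

lemma phi_int: "(\<integral>\<^sup>+x. phi n i x \<partial>lborel) = ennreal (hh n * dd n / (2 * pi) * ln (real (NN n) / 2))"
proof -
  have "(\<integral>\<^sup>+x. phi n i x \<partial>lborel) = ennreal (hh n * dd n / (2 * pi) * ln (RR n / (2 * dd n)))"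
    unfolding phi_def gap_def
    by (rule log_int) (use dd_pos[of n] dd_le[of n] hh_pos[of n] in auto)
  also have "RR n / (2 * dd n) = real (NN n) / 2" unfolding dd_def using RR_pos[of n] NN_pos[of n] by simp
  finally show ?thesis .
qed

lemma group_low: "ennreal (3 * ln 2 / (8 * pi)) \<le> (\<Sum>i<NN n. \<integral>\<^sup>+x. phi n i x \<partial>lborel)"
proof -
  have "(\<Sum>i<NN n. \<integral>\<^sup>+x. phi n i x \<partial>lborel) = ennreal (real (NN n) * (hh n * dd n / (2 * pi) * ln (real (NN n) / 2)))"
  proof -
    define V where "V = hh n * dd n / (2 * pi) * ln (real (NN n) / 2)"
    have V0: "0 \<le> V" unfolding V_def using hh_pos[of n] dd_pos[of n] NN_ge2[of n] by simp
    have "(\<Sum>i<NN n. \<integral>\<^sup>+x. phi n i x \<partial>lborel) = of_nat (NN n) * ennreal V" unfolding phi_int V_def by simp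
    also have "\<dots> = ennreal (real (NN n)) * ennreal V" by (simp add: ennreal_of_nat_eq_real_of_nat)
    also have "\<dots> = ennreal (real (NN n) * V)" using V0 by (simp add: ennreal_mult)
    finally show ?thesis unfolding V_def .
  qed
  also have "real (NN n) * (hh n * dd n / (2 * pi) * ln (real (NN n) / 2)) = lam n ^ 2 * ln (real (NN n) / 2) / (2 * pi)"
    using hh_dd[of n] NN_pos[of n] by (simp add: field_simps)
  also have "ln (real (NN n) / 2) = (4^(n+1) - 1) * ln 2"
  proof -
    have "real (NN n) = 2 ^ (4^(n+1))" by (simp add: NN_def)
    hence "ln (real (NN n)) = 4^(n+1) * ln 2" by (simp add: ln_realpow)
    thus ?thesis using NN_pos[of n] by (simp add: ln_div algebra_simps)
  qed
  also have "lam n ^ 2 * ((4^(n+1) - 1) * ln 2) / (2 * pi) = (1 - (1/4)^(n+1)) * ln 2 / (2 * pi)"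
  proof -
    define q :: real where "q = (1/4)^(n+1)"
    have e1: "lam n ^ 2 = q" unfolding lam_def q_def by (simp add: power_mult_distrib[symmetric] power2_eq_square power_mult[symmetric])
    have e2: "q * 4^(n+1) = 1" unfolding q_def by (simp add: power_mult_distrib[symmetric])
    have "lam n ^ 2 * ((4^(n+1) - 1) * ln 2) = (q * 4^(n+1) - q) * ln 2" unfolding e1 by (simp add: algebra_simps)
    also have "\<dots> = (1 - q) * ln 2" unfolding e2 ..
    finally show ?thesis unfolding q_def by simp
  qed
  finally have eq: "(\<Sum>i<NN n. \<integral>\<^sup>+x. phi n i x \<partial>lborel) = ennreal ((1 - (1/4)^(n+1)) * ln 2 / (2 * pi))" .
  have "(1/4::real)^(n+1) \<le> 1/4" by (simp add: power_le_one)
  hence "3 * ln 2 / (8 * pi) \<le> (1 - (1/4)^(n+1)) * ln 2 / (2 * pi)"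
    by (simp add: field_simps mult_right_mono)
  thus ?thesis unfolding eq by (rule ennreal_leI)
qed

lemma phi_meas[measurable]: "(\<lambda>x. phi n i x) \<in> borel_measurable borel"
  unfolding phi_def gap_def by measurable

lemma g_bound: assumes conv: "((\<lambda>e. trunc_hilbert (\<lambda>y. indicator {0..1} y * Om y) e x) \<longlongrightarrow> g x) (at_right 0)"
  and x: "x \<in> gap n i" and i: "i < NN n"
  shows "phi n i x \<le> ennreal \<bar>g x\<bar>"
proof -
  have gx: "g x = (1/pi) * (\<integral>y. Om y / (x - y) \<partial>lborel)"
    by (rule tendsto_unique[OF _ conv trunc_lim[OF x i]]) simp
  define u where "u = bb n i + dd n - x"
  have u0: "0 < u" using gap_D(1)[OF x] dd_pos[of n] by (simp add: u_def)
  have H: "(\<integral>y. Om y / (x - y) \<partial>lborel) \<le> - (hh n * dd n) / (2 * u)" using H0_bound[OF x i] by (simp add: u_def)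
  have "hh n * dd n / (2 * pi) / u = (1/pi) * ((hh n * dd n) / (2 * u))" by (simp add: field_simps)
  also have "\<dots> \<le> (1/pi) * (- (\<integral>y. Om y / (x - y) \<partial>lborel))" using H by (intro mult_left_mono) auto
  also have "\<dots> = - g x" using gx by simp
  also have "\<dots> \<le> \<bar>g x\<bar>" by simp
  finally have "hh n * dd n / (2 * pi) / u \<le> \<bar>g x\<bar>" .
  thus ?thesis unfolding phi_def u_def using x by (simp add: ennreal_leI)
qed

lemma not_H1: "\<not> in_H1_circle Om"
proof
  assume "in_H1_circle Om"
  hence "\<exists>g. integrable lborel g \<and> (AE x in lborel. ((\<lambda>e. trunc_hilbert (\<lambda>y. indicator {0..1} y * Om y) e x) \<longlongrightarrow> g x) (at_right 0))"
    unfolding in_H1_circle_def by (elim conjE) assumption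
  then obtain g where g: "integrable lborel g" and conv: "AE x in lborel. ((\<lambda>e. trunc_hilbert (\<lambda>y. indicator {0..1} y * Om y) e x) \<longlongrightarrow> g x) (at_right 0)"
    by (elim exE conjE)
  define c0 where "c0 = 3 * ln 2 / (8 * pi)"
  have c0: "0 < c0" unfolding c0_def by simp
  have low: "ennreal (real M * c0) \<le> (\<integral>\<^sup>+x. ennreal \<bar>g x\<bar> \<partial>lborel)" for M
  proof -
    have ae: "AE x in lborel. (\<Sum>n<M. \<Sum>i<NN n. phi n i x) \<le> ennreal \<bar>g x\<bar>"
      using conv
    proof eventually_elim
      case (elim x)
      show ?case
      proof (cases "\<exists>n<M. \<exists>i<NN n. x \<in> gap n i")
        case False
        hence "(\<Sum>n<M. \<Sum>i<NN n. phi n i x) = 0" by (auto simp: phi_def intro!: sum.neutral)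
        thus ?thesis by simp
      next
        case True
        then obtain n0 i0 where n0: "n0 < M" and i0: "i0 < NN n0" and x0: "x \<in> gap n0 i0" by blast
        have inner: "(\<Sum>i<NN n. phi n i x) = (if n = n0 then phi n0 i0 x else 0)" for n
        proof (cases "n = n0")
          case True
          have "(\<Sum>i<NN n. phi n i x) = phi n i0 x + (\<Sum>i\<in>{..<NN n} - {i0}. phi n i x)"
            using i0 True by (subst sum.remove[of _ i0]) auto
          also have "(\<Sum>i\<in>{..<NN n} - {i0}. phi n i x) = 0"
          proof (rule sum.neutral, rule ballI)
            fix i assume "i \<in> {..<NN n} - {i0}"
            hence "i < NN n" "i \<noteq> i0" by auto
            hence "x \<notin> gap n i" using gap_disj[OF x0 i0, of n i] True by auto
            thus "phi n i x = 0" by (simp add: phi_def)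
          qed
          finally show ?thesis using True by simp
        next
          case False
          have "phi n i x = 0" if "i < NN n" for i
          proof -
            have "x \<notin> gap n i" using gap_disj[OF x0 i0, of n i] False that by auto
            thus ?thesis by (simp add: phi_def)
          qed
          thus ?thesis using False by simp
        qed
        have "(\<Sum>n<M. \<Sum>i<NN n. phi n i x) = phi n0 i0 x" unfolding inner using n0 by simp
        also have "\<dots> \<le> ennreal \<bar>g x\<bar>" by (rule g_bound[where g=g, OF elim x0 i0])
        finally show ?thesis .
      qed
    qed
    have "ennreal (real M * c0) = (\<Sum>n<M. ennreal c0)"
      using c0 by (simp add: ennreal_of_nat_eq_real_of_nat ennreal_mult)
    also have "\<dots> \<le> (\<Sum>n<M. \<Sum>i<NN n. \<integral>\<^sup>+x. phi n i x \<partial>lborel)"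
      unfolding c0_def by (intro sum_mono group_low)
    also have "\<dots> = (\<integral>\<^sup>+x. (\<Sum>n<M. \<Sum>i<NN n. phi n i x) \<partial>lborel)"
      by (subst nn_integral_sum, measurable, subst nn_integral_sum, auto)
    also have "\<dots> \<le> (\<integral>\<^sup>+x. ennreal \<bar>g x\<bar> \<partial>lborel)" by (rule nn_integral_mono_AE[OF ae])
    finally show ?thesis .
  qed
  have fin: "(\<integral>\<^sup>+x. ennreal \<bar>g x\<bar> \<partial>lborel) < \<infinity>" using g unfolding integrable_iff_bounded by simp
  then obtain r where r: "(\<integral>\<^sup>+x. ennreal \<bar>g x\<bar> \<partial>lborel) = ennreal r" "0 \<le> r"
    using fin by (cases "(\<integral>\<^sup>+x. ennreal \<bar>g x\<bar> \<partial>lborel)" rule: ennreal_cases) auto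
  define M where "M = nat \<lceil>r / c0\<rceil> + 1"
  have "r / c0 < real M" unfolding M_def by linarith
  hence "r < real M * c0" using c0 by (simp add: field_simps)
  moreover have "real M * c0 \<le> r" using low[of M] r c0 by (simp add: ennreal_le_iff)
  ultimately show False by simp
qed

theorem mainTheorem8:
  shows "\<exists>\<Omega> :: real \<Rightarrow> real.
     set_integrable lborel {0..1} \<Omega> \<and>
     (LINT x:{0..1}|lborel. \<Omega> x) = 0 \<and>
     \<not> in_H1_circle \<Omega> \<and>
     (\<forall>\<alpha>::real. \<alpha> > 0 \<longrightarrow>
        (SUP t\<in>{0..1}. \<integral>\<^sup>+ x\<in>{0..1}.
            ennreal (\<bar>\<Omega> x\<bar> * (ln (1 / \<bar>cos (2 * pi * (x - t))\<bar>)) powr (1 + \<alpha>)) \<partial>lborel) < \<infinity>)"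
  proof (intro exI[of _ Om] conjI allI impI)
  show "set_integrable lborel {0..1} Om"
    unfolding set_integrable_def using Om_integrable by (simp add: Om_ind)
  show "(LINT x:{0..1}|lborel. Om x) = 0"
    unfolding set_lebesgue_integral_def using Om_integral by (simp add: Om_ind)
  show "\<not> in_H1_circle Om" by (rule not_H1)
  fix al :: real assume "al > 0"
  thus "(SUP t\<in>{0..1}. \<integral>\<^sup>+ x\<in>{0..1}.
            ennreal (\<bar>Om x\<bar> * (ln (1 / \<bar>cos (2 * pi * (x - t))\<bar>)) powr (1 + al)) \<partial>lborel) < \<infinity>"
    by (rule log_cond)
qed

end
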